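(* Let $P,Q,R\in D_P$ be pairwise distinct. Let $T_1,T_2\in S^1$ be the two endpoints at infinity of the hyperbolic line through $P$ and $Q$. Let $C_1,C_2$ be the two circular arcs in $D_P$ with endpoints $T_1,T_2$, lying on opposite sides of the hyperbolic line $PQ$, each meeting $S^1$ at $T_1$ and at $T_2$ with angle $2\arctan(e^{d(P,Q)})-\pi/2$. Let $\Theta$ be the open region of $D_P$ bounded by $C_1$ and $C_2$ (the region containing the hyperbolic line $PQ$). Let $m$ be the number of ideal triangles circumscribing $\triangle PQR$. Then $$m=\begin{cases}0 & \text{if } R\in\Theta,\\ 1 & \text{if } R\in C_1\cup C_2,\\ 2 & \text{if } R\in D_P\setminus \overline{\Theta}.\end{cases}$$
   Context: $D_P=\{z\in\mathbb{C}:|z|<1\}$ is the Poincaré disk with metric $ds^2=4\frac{dx^2+dy^2}{(1-x^2-y^2)^2}$ and boundary at infinity $S^1=\{|z|=1\}$; hyperbolic lines are arcs of circles or diameters orthogonal to $S^1$; $d$ is the hyperbolic distance, $d(P,Q)=\operatorname{arccosh}\left(1+\frac{2|P-Q|^2}{(1-|P|^2)(1-|Q|^2)}\right)$. An ideal triangle circumscribing $\triangle PQR$ is a triangle whose three vertices are distinct points of $S^1$ and whose sides are hyperbolic lines joining them, such that $P$, $Q$, $R$ lie on three distinct sides (one point on each side). *)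

theory Defs
  imports "HOL-Analysis.Analysis"
begin

definition PDisk :: "complex set" where
  "PDisk = {z. cmod z < 1}"

definition hdist :: "complex \<Rightarrow> complex \<Rightarrow> real" where
  "hdist P Q = arcosh (1 + 2 * (cmod (P - Q))^2 / ((1 - (cmod P)^2) * (1 - (cmod Q)^2)))"

text \<open>Generalized circle A|z|^2 + Re(conj B * z) + C = 0 (A = 0: straight line).
  It is a genuine circle of positive radius or a line iff |B|^2 > 4AC.\<close>
definition gcircle :: "real \<Rightarrow> complex \<Rightarrow> real \<Rightarrow> complex set" where
  "gcircle A B C = {z. A * (cmod z)^2 + Re (cnj B * z) + C = 0}"

definition gcircle_nondeg :: "real \<Rightarrow> complex \<Rightarrow> real \<Rightarrow> bool" where
  "gcircle_nondeg A B C \<longleftrightarrow> (cmod B)^2 > 4 * A * C"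

text \<open>Normal vector of gcircle A B C at z (the gradient of its defining function).\<close>
definition gcircle_normal :: "real \<Rightarrow> complex \<Rightarrow> complex \<Rightarrow> complex" where
  "gcircle_normal A B z = 2 * of_real A * z + B"

text \<open>(Unoriented) angle in [0, pi/2] between two curves with normal vectors n1, n2
  at a common point, i.e. the angle between their tangent lines.\<close>
definition curve_angle :: "complex \<Rightarrow> complex \<Rightarrow> real" where
  "curve_angle n1 n2 = arccos (\<bar>n1 \<bullet> n2\<bar> / (norm n1 * norm n2))"

text \<open>Hyperbolic line with ideal endpoints a, b: the part inside the disk of the
  circle or straight line through a and b orthogonal to the unit circle S^1
  (whose normal at a point T of S^1 is T).\<close>
definition hline :: "complex \<Rightarrow> complex \<Rightarrow> complex set" where
  "hline a b = {z \<in> PDisk. \<exists>A B C. gcircle_nondeg A B C \<and>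
      a \<in> gcircle A B C \<and> b \<in> gcircle A B C \<and> z \<in> gcircle A B C \<and>
      curve_angle (gcircle_normal A B a) a = pi / 2}"

definition angle_arcs :: "complex \<Rightarrow> complex \<Rightarrow> real \<Rightarrow> complex set" where
  "angle_arcs T1 T2 alpha = {z \<in> PDisk. \<exists>A B C. gcircle_nondeg A B C \<and>
      T1 \<in> gcircle A B C \<and> T2 \<in> gcircle A B C \<and> z \<in> gcircle A B C \<and>
      curve_angle (gcircle_normal A B T1) T1 = alpha \<and>
      curve_angle (gcircle_normal A B T2) T2 = alpha}"

text \<open>Ideal triangles (identified with their vertex sets) circumscribing triangle PQR:
  P, Q, R lie one on each of the three sides.\<close>
definition circ_ideal_triangles :: "complex \<Rightarrow> complex \<Rightarrow> complex \<Rightarrow> complex set set" where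
  "circ_ideal_triangles P Q R = {{u, v, w} | u v w.
      cmod u = 1 \<and> cmod v = 1 \<and> cmod w = 1 \<and> u \<noteq> v \<and> v \<noteq> w \<and> u \<noteq> w \<and>
      P \<in> hline u v \<and> Q \<in> hline v w \<and> R \<in> hline w u}"

end

theory Submission
  imports Defs
begin


definition arcs_gen :: "complex \<Rightarrow> complex \<Rightarrow> real \<Rightarrow> complex set" where
  "arcs_gen a b r = {z \<in> PDisk. \<exists>A B C. gcircle_nondeg A B C \<and>
      a \<in> gcircle A B C \<and> b \<in> gcircle A B C \<and> z \<in> gcircle A B C \<and>
      \<bar>A - C\<bar> = r * sqrt ((cmod B)^2 - 4*A*C)}"

lemma unit_sq: "cmod T = 1 \<Longrightarrow> (Re T)^2 + (Im T)^2 = 1"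
  by (metis cmod_power2 power_one)

lemma angle_ratio:
  assumes T: "cmod T = 1" and "T \<in> gcircle A B C" and nd: "gcircle_nondeg A B C"
  shows "curve_angle (gcircle_normal A B T) T = arccos (\<bar>A - C\<bar> / sqrt ((cmod B)^2 - 4*A*C))"
proof -
  have t: "(Re T)^2 + (Im T)^2 = 1" using T unit_sq by blast
  have eq: "A * ((Re T)^2 + (Im T)^2) + (Re B * Re T + Im B * Im T) + C = 0"
    using assms(2) unfolding gcircle_def by (simp add: cmod_power2)
  then have eq1: "A + (Re B * Re T + Im B * Im T) + C = 0" by (simp add: t)
  then have eq2: "Re B * Re T + Im B * Im T = -A - C" by linarith
  have i: "gcircle_normal A B T \<bullet> T = A - C"
  proof -
    have "gcircle_normal A B T \<bullet> T = 2*A*((Re T)^2 + (Im T)^2) + (Re B * Re T + Im B * Im T)"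
      unfolding gcircle_normal_def inner_complex_def by (simp add: algebra_simps power2_eq_square)
    then show ?thesis using eq1 t by simp
  qed
  have "(norm (gcircle_normal A B T))^2 = (cmod B)^2 - 4*A*C"
  proof -
    have "(norm (gcircle_normal A B T))^2 = 4*A^2*((Re T)^2 + (Im T)^2) + 4*A*(Re B * Re T + Im B * Im T) + ((Re B)^2 + (Im B)^2)"
      unfolding gcircle_normal_def cmod_power2 by (simp add: algebra_simps power2_eq_square)
    also have "\<dots> = 4*A^2 + 4*A*(-A-C) + ((Re B)^2 + (Im B)^2)" by (simp only: eq2 t)
    finally show ?thesis using cmod_power2[of B] by (simp add: algebra_simps power2_eq_square)
  qed
  then have n: "norm (gcircle_normal A B T) = sqrt ((cmod B)^2 - 4*A*C)"
    by (metis norm_ge_zero real_sqrt_unique)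
  show ?thesis unfolding curve_angle_def i n using T by simp
qed

lemma ratio_bound:
  assumes T: "cmod T = 1" and "T \<in> gcircle A B C"
  shows "\<bar>A - C\<bar> \<le> sqrt ((cmod B)^2 - 4*A*C)"
proof -
  have t: "(Re T)^2 + (Im T)^2 = 1" using T unit_sq by blast
  have eq: "A * ((Re T)^2 + (Im T)^2) + (Re B * Re T + Im B * Im T) + C = 0"
    using assms(2) unfolding gcircle_def by (simp add: cmod_power2)
  then have eq2: "Re B * Re T + Im B * Im T = -A - C" by (simp add: t)
  have cs: "(Re B * Re T + Im B * Im T)^2 \<le> ((Re B)^2 + (Im B)^2) * ((Re T)^2 + (Im T)^2)"
    using sum_squares_ge_zero[of "Re B * Im T - Im B * Re T" 0]
    by (simp add: algebra_simps power2_eq_square)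
  then have "(A + C)^2 \<le> (cmod B)^2" using eq2 t by (simp add: cmod_power2 power2_minus) (smt (verit) power2_minus)
  then have "(A - C)^2 \<le> (cmod B)^2 - 4*A*C" by (simp add: algebra_simps power2_eq_square)
  then show ?thesis by (metis real_le_rsqrt real_sqrt_abs power2_abs real_sqrt_le_mono)
qed

lemma nondeg_pos: "gcircle_nondeg A B C \<Longrightarrow> sqrt ((cmod B)^2 - 4*A*C) > 0"
  unfolding gcircle_nondeg_def by simp

lemma hline_gen: assumes "cmod a = 1" shows "hline a b = arcs_gen a b 0"
proof -
  have "(curve_angle (gcircle_normal A B a) a = pi / 2) \<longleftrightarrow> \<bar>A - C\<bar> = 0 * sqrt ((cmod B)^2 - 4*A*C)"
    if "gcircle_nondeg A B C" "a \<in> gcircle A B C" for A B C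
  proof -
    let ?x = "\<bar>A - C\<bar> / sqrt ((cmod B)^2 - 4*A*C)"
    have p: "sqrt ((cmod B)^2 - 4*A*C) > 0" using nondeg_pos that by blast
    have b: "?x \<le> 1" using ratio_bound[OF assms that(2)] p by simp
    have b2: "?x \<ge> 0" using p by simp
    have "arccos ?x = pi/2 \<longleftrightarrow> ?x = 0"
      by (metis arccos_0 b b2 cos_arccos cos_pi_half le_minus_one_simps(1) order.trans)
    then show ?thesis using angle_ratio[OF assms that(2,1)] p by simp
  qed
  then show ?thesis unfolding hline_def arcs_gen_def by blast
qed

lemma angle_arcs_gen:
  assumes "cmod T1 = 1" "cmod T2 = 1" "0 \<le> \<alpha>" "\<alpha> \<le> pi"
  shows "angle_arcs T1 T2 \<alpha> = arcs_gen T1 T2 (cos \<alpha>)"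
proof -
  have key: "(curve_angle (gcircle_normal A B T) T = \<alpha>) \<longleftrightarrow> \<bar>A - C\<bar> = cos \<alpha> * sqrt ((cmod B)^2 - 4*A*C)"
    if "gcircle_nondeg A B C" "T \<in> gcircle A B C" "cmod T = 1" for A B C T
  proof -
    let ?x = "\<bar>A - C\<bar> / sqrt ((cmod B)^2 - 4*A*C)"
    have p: "sqrt ((cmod B)^2 - 4*A*C) > 0" using nondeg_pos that by blast
    have b: "?x \<le> 1" using ratio_bound[OF that(3,2)] p by simp
    have b2: "?x \<ge> 0" using p by simp
    have "arccos ?x = \<alpha> \<longleftrightarrow> ?x = cos \<alpha>"
      by (metis arccos_cos assms(3,4) b b2 cos_arccos le_minus_one_simps(1) order.trans)
    then show ?thesis using angle_ratio[OF that(3,2,1)] p by (simp add: field_simps)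
  qed
  show ?thesis unfolding angle_arcs_def arcs_gen_def using key assms(1,2) by blast
qed



definition mob :: "complex \<Rightarrow> complex \<Rightarrow> complex \<Rightarrow> complex" where
  "mob l c z = l * (z - c) / (1 - cnj c * z)"

lemma den_nz: assumes "cmod c < 1" "cmod z \<le> 1" shows "1 - cnj c * z \<noteq> 0"
proof
  assume "1 - cnj c * z = 0"
  then have "cnj c * z = 1" by simp
  then have "cmod (cnj c * z) = 1" by simp
  then have "cmod c * cmod z = 1" by (simp only: norm_mult complex_mod_cnj)
  moreover have "cmod c * cmod z < 1"
  proof -
    have "cmod c * cmod z \<le> cmod c" using assms(2) by (simp add: mult_left_le)
    then show ?thesis using assms(1) by linarith
  qed
  ultimately show False by simp
qed

lemma poly1: "(cmod (1 - cnj c * z))^2 - (cmod (z - c))^2 = (1 - (cmod c)^2) * (1 - (cmod z)^2)"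
  unfolding cmod_power2 by simp algebra

lemma one_minus_mob:
  assumes "cmod l = 1" "1 - cnj c * z \<noteq> 0"
  shows "1 - (cmod (mob l c z))^2 = (1 - (cmod c)^2) * (1 - (cmod z)^2) / (cmod (1 - cnj c * z))^2"
proof -
  have "cmod (mob l c z) = cmod (z - c) / cmod (1 - cnj c * z)"
    unfolding mob_def using assms by (simp add: norm_divide norm_mult)
  then have "(cmod (mob l c z))^2 = (cmod (z - c))^2 / (cmod (1 - cnj c * z))^2"
    by (simp add: power_divide)
  moreover have "(cmod (1 - cnj c * z))^2 > 0" using assms by simp
  ultimately show ?thesis using poly1[of c z] by (simp add: field_simps)
qed

lemma mob_disk: assumes "cmod l = 1" "cmod c < 1" "cmod z < 1" shows "cmod (mob l c z) < 1"
proof -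
  have d: "1 - cnj c * z \<noteq> 0" using den_nz assms by simp
  have "(1 - (cmod c)^2) * (1 - (cmod z)^2) > 0" using assms
    by (simp add: abs_square_less_1)
  then have "1 - (cmod (mob l c z))^2 > 0" using one_minus_mob[OF assms(1) d] d by simp
  then show ?thesis by (simp add: abs_square_less_1)
qed

lemma mob_circle: assumes "cmod l = 1" "cmod c < 1" "cmod z = 1" shows "cmod (mob l c z) = 1"
proof -
  have d: "1 - cnj c * z \<noteq> 0" using den_nz assms by simp
  have "1 - (cmod (mob l c z))^2 = 0" using one_minus_mob[OF assms(1) d] assms(3) by simp
  then show ?thesis using norm_ge_zero[of "mob l c z"] by (auto simp: power2_eq_1_iff)
qed

lemma mob_inv:
  assumes "cmod l = 1" "cmod c < 1" "1 - cnj c * z \<noteq> 0"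
  shows "mob (cnj l) (-(l*c)) (mob l c z) = z"
proof -
  have ll: "cnj l * l = 1" using assms(1) complex_norm_square[of l] by (simp add: mult.commute)
  have cc: "1 - cnj c * c \<noteq> 0" using den_nz[of c c] assms(2) by simp
  have e1: "mob l c z + l * c = l * z * (1 - cnj c * c) / (1 - cnj c * z)"
    unfolding mob_def using assms(3) by (simp add: field_simps)
  have e2: "1 + cnj l * cnj c * mob l c z = (1 - cnj c * c) / (1 - cnj c * z)"
    unfolding mob_def using assms(3) ll by (simp add: field_simps)
  have "mob (cnj l) (-(l*c)) (mob l c z) = cnj l * (mob l c z + l * c) / (1 + cnj l * cnj c * mob l c z)"
    unfolding mob_def[of "cnj l"] by (simp add: algebra_simps)
  also have "\<dots> = z"
  proof -
    have l0: "l \<noteq> 0" using assms(1) by auto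
    have cl: "cnj l = 1 / l" using ll l0 by (simp add: field_simps)
    have k: "(1 - cnj c * c) / (1 - cnj c * z) \<noteq> 0" using assms(3) cc by simp
    have "cnj l * (l * z * (1 - cnj c * c) / (1 - cnj c * z)) = z * ((1 - cnj c * c) / (1 - cnj c * z))"
      by (simp add: mult.assoc[symmetric] ll)
    then show ?thesis unfolding e1 e2 using k by (simp add: nonzero_divide_eq_eq)
  qed
  finally show ?thesis .
qed

definition mA :: "complex \<Rightarrow> real \<Rightarrow> complex \<Rightarrow> real \<Rightarrow> real" where
  "mA c A B C = A + Re (cnj B * c) + C * (cmod c)^2"
definition mC :: "complex \<Rightarrow> real \<Rightarrow> complex \<Rightarrow> real \<Rightarrow> real" where
  "mC c A B C = A * (cmod c)^2 + Re (cnj B * c) + C"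
definition mB :: "complex \<Rightarrow> complex \<Rightarrow> real \<Rightarrow> complex \<Rightarrow> real \<Rightarrow> complex" where
  "mB l c A B C = l * (B + 2 * of_real (A + C) * c + c^2 * cnj B)"

lemma poly2:
  "mA c A B C * (cmod (z - c))^2 + Re (cnj (B + 2 * of_real (A + C) * c + c^2 * cnj B) * (z - c) * cnj (1 - cnj c * z))
     + mC c A B C * (cmod (1 - cnj c * z))^2
   = (A * (cmod z)^2 + Re (cnj B * z) + C) * (1 - (cmod c)^2)^2"
  unfolding mA_def mC_def cmod_power2 by (simp add: power2_eq_square) algebra

lemma mAC: "mA c A B C - mC c A B C = (A - C) * (1 - (cmod c)^2)"
  unfolding mA_def mC_def by (simp add: algebra_simps)

lemma mdisc: assumes "cmod l = 1"
  shows "(cmod (mB l c A B C))^2 - 4 * mA c A B C * mC c A B C = (1 - (cmod c)^2)^2 * ((cmod B)^2 - 4*A*C)"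
proof -
  have "cmod (mB l c A B C) = cmod (B + 2 * of_real (A + C) * c + c^2 * cnj B)"
    unfolding mB_def using assms by (simp add: norm_mult)
  moreover have "(cmod (B + 2 * of_real (A + C) * c + c^2 * cnj B))^2 - 4 * mA c A B C * mC c A B C = (1 - (cmod c)^2)^2 * ((cmod B)^2 - 4*A*C)"
    unfolding mA_def mC_def cmod_power2 by (simp add: power2_eq_square) algebra
  ultimately show ?thesis by simp
qed

lemma re_div: "Re (X / d) = Re (X * cnj d) / (cmod d)^2"
  using cmod_power2[of d] by (simp add: Re_divide power2_eq_square)

lemma mob_gcircle:
  assumes l: "cmod l = 1" and d: "1 - cnj c * z \<noteq> 0" and z: "z \<in> gcircle A B C"
  shows "mob l c z \<in> gcircle (mA c A B C) (mB l c A B C) (mC c A B C)"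
proof -
  let ?d = "1 - cnj c * z"
  let ?B = "B + 2 * of_real (A + C) * c + c^2 * cnj B"
  have ll: "cnj l * l = 1" using l complex_norm_square[of l] by (simp add: mult.commute)
  have dp: "(cmod ?d)^2 > 0" using d by simp
  have n: "(cmod (mob l c z))^2 = (cmod (z - c))^2 / (cmod ?d)^2"
    unfolding mob_def using l by (simp add: norm_divide norm_mult power_divide)
  have "cnj (mB l c A B C) * mob l c z = (cnj l * l) * (cnj ?B * (z - c)) / ?d"
    unfolding mB_def mob_def complex_cnj_mult by (simp only: times_divide_eq_right times_divide_eq_left mult_ac)
  also have "\<dots> = (cnj ?B * (z - c)) / ?d" using ll by simp
  finally have r: "Re (cnj (mB l c A B C) * mob l c z) = Re (cnj ?B * (z - c) * cnj ?d) / (cmod ?d)^2"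
    by (simp only: re_div)
  have g: "A * (cmod z)^2 + Re (cnj B * z) + C = 0" using z unfolding gcircle_def by simp
  have "mA c A B C * (cmod (mob l c z))^2 + Re (cnj (mB l c A B C) * mob l c z) + mC c A B C
      = (mA c A B C * (cmod (z - c))^2 + Re (cnj ?B * (z - c) * cnj ?d) + mC c A B C * (cmod ?d)^2) / (cmod ?d)^2"
    unfolding n r using dp by (simp add: field_simps)
  also have "\<dots> = 0" unfolding poly2 g by simp
  finally show ?thesis unfolding gcircle_def by simp
qed

lemma mob_arcs:
  assumes l: "cmod l = 1" and c: "cmod c < 1" and a: "cmod a = 1" and b: "cmod b = 1"
    and z: "z \<in> arcs_gen a b r"
  shows "mob l c z \<in> arcs_gen (mob l c a) (mob l c b) r"
proof -
  have zd: "cmod z < 1" using z unfolding arcs_gen_def PDisk_def by simp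
  obtain A B C where nd: "gcircle_nondeg A B C" and abz: "a \<in> gcircle A B C" "b \<in> gcircle A B C" "z \<in> gcircle A B C"
    and rr: "\<bar>A - C\<bar> = r * sqrt ((cmod B)^2 - 4*A*C)"
    using z unfolding arcs_gen_def by blast
  have cp: "1 - (cmod c)^2 > 0" using c by (simp add: abs_square_less_1)
  have da: "1 - cnj c * a \<noteq> 0" using den_nz c a by simp
  have db: "1 - cnj c * b \<noteq> 0" using den_nz c b by simp
  have dz: "1 - cnj c * z \<noteq> 0" using den_nz c zd by simp
  have nd': "gcircle_nondeg (mA c A B C) (mB l c A B C) (mC c A B C)"
    using nd cp unfolding gcircle_nondeg_def
    by (metis mdisc[OF l] diff_gt_0_iff_gt mult_pos_pos zero_less_power)
  have "\<bar>mA c A B C - mC c A B C\<bar> = r * sqrt ((cmod (mB l c A B C))^2 - 4 * mA c A B C * mC c A B C)"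
    unfolding mAC mdisc[OF l] using cp rr by (simp add: abs_mult real_sqrt_mult)
  moreover have "mob l c z \<in> PDisk" using mob_disk[OF l c zd] unfolding PDisk_def by simp
  ultimately show ?thesis unfolding arcs_gen_def
    using nd' mob_gcircle[OF l da abz(1)] mob_gcircle[OF l db abz(2)] mob_gcircle[OF l dz abz(3)] by blast
qed



definition hD :: "complex \<Rightarrow> complex \<Rightarrow> complex \<Rightarrow> real" where
  "hD u v z = (1 + (cmod z)^2) * (Re u * Im v - Im u * Re v)
     + 2 * (Re v * Im z - Re u * Im z + Im u * Re z - Im v * Re z)"

lemma unit_ne_x: assumes "cmod u = 1" "cmod v = 1" "u \<noteq> v"
  shows "Re u * Re v + Im u * Im v \<noteq> 1"
proof
  assume h: "Re u * Re v + Im u * Im v = 1"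
  have "(Re u - Re v)^2 + (Im u - Im v)^2 = 0"
    using h unit_sq[OF assms(1)] unit_sq[OF assms(2)] by (simp add: power2_diff algebra_simps)
  then have "Re u = Re v" "Im u = Im v" by (simp_all add: sum_power2_eq_zero_iff)
  then show False using assms(3) complex_eqI by blast
qed

lemma hline_D:
  assumes u: "cmod u = 1" and v: "cmod v = 1" and uv: "u \<noteq> v"
  shows "hline u v = {z \<in> PDisk. hD u v z = 0}"
proof -
  have U: "(Re u)^2 + (Im u)^2 = 1" using unit_sq[OF u] .
  have V: "(Re v)^2 + (Im v)^2 = 1" using unit_sq[OF v] .
  have x1: "Re u * Re v + Im u * Im v \<noteq> 1" using unit_ne_x[OF u v uv] .
  show ?thesis
  proof (intro set_eqI iffI)
    fix z assume "z \<in> hline u v"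
    then obtain A B C where nd: "gcircle_nondeg A B C" and g: "u \<in> gcircle A B C" "v \<in> gcircle A B C" "z \<in> gcircle A B C"
      and ac: "\<bar>A - C\<bar> = 0 * sqrt ((cmod B)^2 - 4*A*C)" and zd: "z \<in> PDisk"
      unfolding hline_gen[OF u] arcs_gen_def by blast
    have CA: "C = A" using ac by simp
    have e1: "A * ((Re u)^2 + (Im u)^2) + (Re B * Re u + Im B * Im u) + A = 0"
      using g(1) CA unfolding gcircle_def by (simp add: cmod_power2)
    have e2: "A * ((Re v)^2 + (Im v)^2) + (Re B * Re v + Im B * Im v) + A = 0"
      using g(2) CA unfolding gcircle_def by (simp add: cmod_power2)
    have e3: "A * ((Re z)^2 + (Im z)^2) + (Re B * Re z + Im B * Im z) + A = 0"
      using g(3) CA unfolding gcircle_def by (simp add: cmod_power2)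
    have e1': "2*A + (Re B * Re u + Im B * Im u) = 0" using e1 U by simp
    have e2': "2*A + (Re B * Re v + Im B * Im v) = 0" using e2 V by simp
    have B0: "B \<noteq> 0"
    proof
      assume "B = 0"
      then have "4*A*A < 0" using nd CA unfolding gcircle_nondeg_def by simp
      moreover have "0 \<le> A*A" by simp
      ultimately show False by linarith
    qed
    have d1: "hD u v z * Re B = 0" using e1' e2' e3 unfolding hD_def cmod_power2 by algebra
    have d2: "hD u v z * Im B = 0" using e1' e2' e3 unfolding hD_def cmod_power2 by algebra
    have "hD u v z = 0" using d1 d2 B0 complex_eqI[of B 0] by auto
    then show "z \<in> {z \<in> PDisk. hD u v z = 0}" using zd by simp
  next
    fix z assume "z \<in> {z \<in> PDisk. hD u v z = 0}"
    then have zd: "z \<in> PDisk" and h: "hD u v z = 0" by auto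
    define A where "A = Re u * Im v - Im u * Re v"
    define B where "B = Complex (2 * (Im u - Im v)) (-2 * (Re u - Re v))"
    have "(1 - (Re u * Re v + Im u * Im v))^2 > 0" using x1 by simp
    moreover have "(cmod B)^2 - 4 * A * A = 4 * (1 - (Re u * Re v + Im u * Im v))^2"
      unfolding A_def B_def cmod_power2 using U V by simp algebra
    ultimately have nd: "gcircle_nondeg A B A" unfolding gcircle_nondeg_def by linarith
    have gu: "u \<in> gcircle A B A"
    proof -
      have "(cmod u)^2 = 1" using u by simp
      moreover have "2*A + Re (cnj B * u) = 0" unfolding A_def B_def by (simp add: algebra_simps)
      ultimately show ?thesis unfolding gcircle_def by simp
    qed
    have gv: "v \<in> gcircle A B A"
    proof -
      have "(cmod v)^2 = 1" using v by simp
      moreover have "2*A + Re (cnj B * v) = 0" unfolding A_def B_def by (simp add: algebra_simps)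
      ultimately show ?thesis unfolding gcircle_def by simp
    qed
    have gz: "z \<in> gcircle A B A" using h unfolding gcircle_def A_def B_def hD_def cmod_power2 by simp algebra
    have "z \<in> arcs_gen u v 0" unfolding arcs_gen_def using zd nd gu gv gz by auto
    then show "z \<in> hline u v" unfolding hline_gen[OF u] .
  qed
qed

lemma E_identity:
  assumes u: "cmod u = 1" and v: "cmod v = 1"
  shows "((u+v) * (1 + of_real ((cmod z)^2)) - 2 * (z + u * v * cnj z)) * cnj (u - v) = 2 * \<i> * of_real (hD u v z)"
proof -
  have U: "(Re u)^2 + (Im u)^2 = 1" using unit_sq[OF u] .
  have V: "(Re v)^2 + (Im v)^2 = 1" using unit_sq[OF v] .
  show ?thesis
  proof (rule complex_eqI)
    show "Re (((u+v) * (1 + of_real ((cmod z)^2)) - 2 * (z + u * v * cnj z)) * cnj (u - v)) = Re (2 * \<i> * of_real (hD u v z))"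
      using U V unfolding hD_def cmod_power2 by (simp add: power2_eq_square) algebra
    show "Im (((u+v) * (1 + of_real ((cmod z)^2)) - 2 * (z + u * v * cnj z)) * cnj (u - v)) = Im (2 * \<i> * of_real (hD u v z))"
      using U V unfolding hD_def cmod_power2 by (simp add: power2_eq_square) algebra
  qed
qed

lemma hline_E:
  assumes u: "cmod u = 1" and v: "cmod v = 1" and uv: "u \<noteq> v"
  shows "hline u v = {z \<in> PDisk. (u+v) * (1 + of_real ((cmod z)^2)) = 2 * (z + u * v * cnj z)}"
proof -
  have "hD u v z = 0 \<longleftrightarrow> (u+v) * (1 + of_real ((cmod z)^2)) = 2 * (z + u * v * cnj z)" for z
  proof -
    have c: "cnj (u - v) \<noteq> 0" using uv by simp
    have "hD u v z = 0 \<longleftrightarrow> 2 * \<i> * of_real (hD u v z) = 0" by simp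
    also have "\<dots> \<longleftrightarrow> ((u+v) * (1 + of_real ((cmod z)^2)) - 2 * (z + u * v * cnj z)) = 0"
      unfolding E_identity[OF u v, symmetric] using c by simp
    finally show ?thesis by simp
  qed
  then show ?thesis unfolding hline_D[OF u v uv] by simp
qed



lemma re_eq_norm: "Re w = cmod w \<Longrightarrow> w = of_real (cmod w)"
proof -
  assume h: "Re w = cmod w"
  have "(Re w)^2 + (Im w)^2 = (cmod w)^2" by (simp add: cmod_power2)
  then have "Im w = 0" using h by simp
  then show ?thesis using h by (simp add: complex_eq_iff)
qed

lemma circle_sol_none:
  assumes "cmod al < cc" shows "{v. cmod v = 1 \<and> Re (al * v) = cc} = {}"
proof -
  have "Re (al * v) < cc" if "cmod v = 1" for v
    using complex_Re_le_cmod[of "al * v"] that assms by (simp add: norm_mult)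
  then show ?thesis by force
qed

lemma circle_sol_one:
  assumes "cmod al = cc" "cc > 0" shows "{v. cmod v = 1 \<and> Re (al * v) = cc} = {cnj al / of_real cc}"
proof -
  have al0: "al \<noteq> 0" using assms by auto
  have aa: "al * cnj al = of_real (cc^2)"
  proof -
    have "al * cnj al = of_real ((cmod al)^2)" by (rule complex_norm_square[symmetric])
    then show ?thesis using assms(1) by simp
  qed
  have one: "v = cnj al / of_real cc" if "cmod v = 1" "Re (al * v) = cc" for v
  proof -
    have "Re (al * v) = cmod (al * v)" using that assms by (simp add: norm_mult)
    then have "al * v = of_real cc" using re_eq_norm[of "al * v"] that assms by (simp add: norm_mult)
    moreover have "v = (al * v) / al" using al0 by simp
    ultimately have "v = of_real cc / al" by simp
    also have "\<dots> = cnj al / of_real cc"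
    proof -
      have aa': "of_real cc * of_real cc = cnj al * al"
        by (metis aa mult.commute of_real_mult power2_eq_square)
      show ?thesis using al0 assms(2) aa' by (subst frac_eq_eq) auto
    qed
    finally show ?thesis .
  qed
  have two: "cmod (cnj al / of_real cc) = 1" using assms by (simp add: norm_divide)
  have three: "Re (al * (cnj al / of_real cc)) = cc"
  proof -
    have "al * (cnj al / of_real cc) = of_real (cc^2) / of_real cc" by (simp only: times_divide_eq_right aa)
    then show ?thesis using assms(2) by (simp add: power2_eq_square)
  qed
  show ?thesis
  proof (intro set_eqI iffI)
    fix v assume "v \<in> {v. cmod v = 1 \<and> Re (al * v) = cc}"
    then show "v \<in> {cnj al / of_real cc}" using one by simp
  next
    fix v assume "v \<in> {cnj al / of_real cc}"
    then have ev: "v = cnj al / of_real cc" by simp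
    show "v \<in> {v. cmod v = 1 \<and> Re (al * v) = cc}"
      by (intro CollectI conjI) (simp_all only: ev two three)
  qed
qed

lemma circle_sol_two:
  assumes "cmod al > cc" "cc > 0" shows "card {v. cmod v = 1 \<and> Re (al * v) = cc} = 2"
proof -
  define r where "r = cmod al"
  have r0: "r > 0" using assms r_def by linarith
  define k where "k = cc / r"
  have k: "0 < k" "k < 1" using assms r0 unfolding k_def r_def by (auto simp: field_simps)
  define t where "t = sqrt (1 - k^2)"
  have t: "t > 0" using k unfolding t_def by (simp add: power_less_one_iff abs_square_less_1)
  have tt: "t^2 = 1 - k^2" unfolding t_def using k by (simp add: abs_square_le_1)
  have al0: "al \<noteq> 0"
  proof
    assume "al = 0" then show False using assms by simp
  qed
  define v1 where "v1 = cnj al / of_real r * Complex k t"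
  define v2 where "v2 = cnj al / of_real r * Complex k (-t)"
  have aa: "al * cnj al = of_real (r^2)"
  proof -
    have "al * cnj al = of_real ((cmod al)^2)" by (rule complex_norm_square[symmetric])
    then show ?thesis using r_def by simp
  qed
  have alv: "al * (cnj al / of_real r * e) = of_real r * e" for e
  proof -
    have "al * (cnj al / of_real r * e) = (al * cnj al) / of_real r * e" by simp
    also have "\<dots> = of_real r * e" unfolding aa using r0 by (simp add: power2_eq_square)
    finally show ?thesis .
  qed
  have nCk: "cmod (Complex k t) = 1" "cmod (Complex k (-t)) = 1"
    using tt unfolding cmod_def by simp_all
  have in1: "cmod v1 = 1 \<and> Re (al * v1) = cc" unfolding v1_def alv
    using nCk r0 unfolding r_def k_def by (simp add: norm_mult norm_divide)
  have in2: "cmod v2 = 1 \<and> Re (al * v2) = cc" unfolding v2_def alv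
    using nCk r0 unfolding r_def k_def by (simp add: norm_mult norm_divide)
  have ne: "v1 \<noteq> v2"
  proof
    assume "v1 = v2"
    then have "al * v1 = al * v2" by simp
    then have "Complex k t = Complex k (-t)" unfolding v1_def v2_def alv using r0 by simp
    then show False using t by simp
  qed
  have sub: "v = v1 \<or> v = v2" if "cmod v = 1" "Re (al * v) = cc" for v
  proof -
    define e where "e = al * v / of_real r"
    have ve: "v = cnj al / of_real r * e"
    proof -
      have "cnj al / of_real r * e = (al * cnj al) * v / (of_real r * of_real r)" unfolding e_def by (simp add: field_simps)
      also have "\<dots> = v" unfolding aa using r0 by (simp add: power2_eq_square)
      finally show ?thesis by simp
    qed
    have ce: "cmod e = 1" unfolding e_def using that r0 r_def by (simp add: norm_mult norm_divide)
    have re: "Re e = k" unfolding e_def k_def using that by simp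
    have "(Re e)^2 + (Im e)^2 = 1" using ce unit_sq by blast
    then have "(Im e)^2 = t^2" using re tt by simp
    then have "Im e = t \<or> Im e = -t" using power2_eq_iff by blast
    then have "e = Complex k t \<or> e = Complex k (-t)" using re by (auto simp: complex_eq_iff)
    then show ?thesis using ve unfolding v1_def v2_def by auto
  qed
  have "{v. cmod v = 1 \<and> Re (al * v) = cc} = {v1, v2}"
  proof (intro set_eqI iffI)
    fix v assume "v \<in> {v. cmod v = 1 \<and> Re (al * v) = cc}"
    then show "v \<in> {v1, v2}" using sub by simp
  next
    fix v assume "v \<in> {v1, v2}"
    then show "v \<in> {v. cmod v = 1 \<and> Re (al * v) = cc}" using in1 in2 by auto
  qed
  then show ?thesis using ne by simp
qed



definition wf :: "real \<Rightarrow> complex \<Rightarrow> complex" where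
  "wf s v = (of_real (2 * s) - v * of_real (1+s^2)) / (of_real (1+s^2) - of_real (2 * s) * v)"
definition alf :: "real \<Rightarrow> complex \<Rightarrow> complex" where
  "alf s R = of_real (s * (1+(cmod R)^2)) - of_real (1+s^2) * cnj R"
definition ccf :: "real \<Rightarrow> complex \<Rightarrow> real" where
  "ccf s R = ((1+s^2) * (1+(cmod R)^2) - 4 * s * Re R) / 2"
definition F0 :: "real \<Rightarrow> complex \<Rightarrow> real" where
  "F0 s z = (1-s^2)^2 * (1-(cmod z)^2)^2 - 16 * s^2 * (Im z)^2"

lemma F0_identity: "(2 * ccf s R)^2 - 4 * (cmod (alf s R))^2 = F0 s R"
proof -
  have a: "2 * ccf s R = (1+s^2) * (1+((Re R)^2 + (Im R)^2)) - 4 * s * Re R"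
    unfolding ccf_def cmod_power2 by simp
  have b: "(cmod (alf s R))^2 = (s * (1+((Re R)^2 + (Im R)^2)) - (1+s^2) * Re R)^2 + ((1+s^2) * Im R)^2"
    unfolding alf_def cmod_power2 by simp
  show ?thesis unfolding a b unfolding F0_def cmod_power2 by algebra
qed

lemma ccf_pos: assumes "0 < s" "s < 1" shows "ccf s R > 0"
proof -
  have a: "1 + (cmod R)^2 \<ge> 2 * \<bar>Re R\<bar>"
  proof -
    have "(\<bar>Re R\<bar> - 1)^2 \<ge> 0" by simp
    moreover have "(cmod R)^2 \<ge> (Re R)^2" by (simp add: cmod_power2)
    ultimately show ?thesis by (simp add: power2_diff power2_abs)
  qed
  have b: "1 + s^2 > 2 * s"
  proof -
    have "(1-s)^2 > 0" using assms by simp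
    then show ?thesis by (simp add: power2_diff)
  qed
  have "(1+s^2) * (1+(cmod R)^2) > (2 * s) * (1+(cmod R)^2)"
    using b by (intro mult_strict_right_mono) (auto simp: add_pos_nonneg)
  moreover have "(2 * s) * (1+(cmod R)^2) \<ge> (2 * s) * (2*\<bar>Re R\<bar>)"
    using a assms by (intro mult_left_mono) auto
  moreover have "(2 * s) * (2*\<bar>Re R\<bar>) \<ge> 4 * s * Re R" using assms by (simp add: abs_ge_self)
  ultimately have "(1+s^2) * (1+(cmod R)^2) - 4 * s * Re R > 0" by linarith
  then show ?thesis unfolding ccf_def by simp
qed

lemma den_wf: assumes "0 < s" "s < 1" "cmod v = 1" shows "of_real (1+s^2) - of_real (2 * s) * v \<noteq> 0"
proof
  assume "of_real (1+s^2) - of_real (2 * s) * v = 0"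
  then have "of_real (1+s^2) = of_real (2 * s) * v" by simp
  then have "\<bar>1+s^2\<bar> = \<bar>2 * s\<bar> * cmod v" by (metis norm_of_real norm_mult)
  then have "1 + s^2 = 2 * s" using assms by simp
  moreover have "1 + s^2 > 2 * s"
  proof -
    have "(1-s)^2 > 0" using assms by simp
    then show ?thesis by (simp add: power2_diff)
  qed
  ultimately show False by simp
qed

lemma wf_unit: assumes "0 < s" "s < 1" "cmod v = 1" shows "cmod (wf s v) = 1"
proof -
  have V: "(Re v)^2 + (Im v)^2 = 1" using unit_sq[OF assms(3)] .
  have e1: "(cmod (of_real (2 * s) - v * of_real (1+s^2)))^2 = 4 * s^2 - 4 * s * (1+s^2) * Re v + (1+s^2)^2 * ((Re v)^2+(Im v)^2)"
    unfolding cmod_power2 by (simp add: power2_eq_square algebra_simps)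
  have e2: "(cmod (of_real (1+s^2) - of_real (2 * s) * v))^2 = (1+s^2)^2 - 4 * s * (1+s^2) * Re v + 4 * s^2 * ((Re v)^2+(Im v)^2)"
    unfolding cmod_power2 by (simp add: power2_eq_square algebra_simps)
  have "(cmod (of_real (2 * s) - v * of_real (1+s^2)))^2 = (cmod (of_real (1+s^2) - of_real (2 * s) * v))^2"
    unfolding e1 e2 V by simp
  then have "cmod (of_real (2 * s) - v * of_real (1+s^2)) = cmod (of_real (1+s^2) - of_real (2 * s) * v)"
    by (simp add: power2_eq_iff_nonneg)
  then show ?thesis unfolding wf_def using den_wf[OF assms] by (simp add: norm_divide)
qed

lemma wf_char: assumes "0 < s" "s < 1" "cmod v = 1"
  shows "(v + w) * (1 + of_real ((cmod (of_real s :: complex))^2)) = 2 * (of_real s + v * w * cnj (of_real s))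
     \<longleftrightarrow> w = wf s v"
proof -
  let ?D = "of_real (1+s^2) - of_real (2 * s) * v :: complex"
  have D: "?D \<noteq> 0" using den_wf[OF assms] .
  have "(v + w) * (1 + of_real ((cmod (of_real s :: complex))^2)) = 2 * (of_real s + v * w * cnj (of_real s))
     \<longleftrightarrow> w * ?D = of_real (2 * s) - v * of_real (1+s^2)"
  proof -
    have e: "(v + w) * (1 + of_real ((cmod (of_real s :: complex))^2)) - 2 * (of_real s + v * w * cnj (of_real s))
       = w * ?D - (of_real (2 * s) - v * of_real (1+s^2))"
      by (simp add: algebra_simps power2_eq_square)
    show ?thesis by (metis e eq_iff_diff_eq_0)
  qed
  also have "\<dots> \<longleftrightarrow> w = wf s v" unfolding wf_def using D by (simp add: eq_divide_eq)
  finally show ?thesis .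
qed



lemma key_poly:
  assumes V: "(Re v)^2 + (Im v)^2 = 1"
  shows "((of_real (2 * s) - v * of_real (1+s^2)) - v * (of_real (1+s^2) - of_real (2 * s) * v)) * (1 + of_real ((cmod R)^2))
     - 2 * (R * (of_real (1+s^2) - of_real (2 * s) * v) - (of_real (2 * s) - v * of_real (1+s^2)) * v * cnj R)
   = 2 * v * of_real (2 * Re (alf s R * v) - 2 * ccf s R)"
proof (rule complex_eqI)
  show "Re (((of_real (2 * s) - v * of_real (1+s^2)) - v * (of_real (1+s^2) - of_real (2 * s) * v)) * (1 + of_real ((cmod R)^2))
     - 2 * (R * (of_real (1+s^2) - of_real (2 * s) * v) - (of_real (2 * s) - v * of_real (1+s^2)) * v * cnj R))
   = Re (2 * v * of_real (2 * Re (alf s R * v) - 2 * ccf s R))"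
    unfolding alf_def ccf_def cmod_power2 using V by (simp add: power2_eq_square) algebra
  show "Im (((of_real (2 * s) - v * of_real (1+s^2)) - v * (of_real (1+s^2) - of_real (2 * s) * v)) * (1 + of_real ((cmod R)^2))
     - 2 * (R * (of_real (1+s^2) - of_real (2 * s) * v) - (of_real (2 * s) - v * of_real (1+s^2)) * v * cnj R))
   = Im (2 * v * of_real (2 * Re (alf s R * v) - 2 * ccf s R))"
    unfolding alf_def ccf_def cmod_power2 using V by (simp add: power2_eq_square) algebra
qed

lemma key_eq:
  assumes s: "0 < s" "s < 1" and v: "cmod v = 1"
  shows "(wf s v + - v) * (1 + of_real ((cmod R)^2)) = 2 * (R + wf s v * - v * cnj R)
     \<longleftrightarrow> Re (alf s R * v) = ccf s R"
proof -
  let ?D = "of_real (1+s^2) - of_real (2 * s) * v :: complex"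
  let ?N = "of_real (2 * s) - v * of_real (1+s^2) :: complex"
  let ?n = "1 + of_real ((cmod R)^2) :: complex"
  have D: "?D \<noteq> 0" using den_wf[OF s v] .
  have wD: "wf s v * ?D = ?N" unfolding wf_def using D by simp
  have V: "(Re v)^2 + (Im v)^2 = 1" using unit_sq[OF v] .
  have v0: "v \<noteq> 0" using v by auto
  have i1: "((w + - v) * ?n - 2 * (R + w * - v * cnj R)) * ?D = (w * ?D - v * ?D) * ?n - 2 * (R * ?D - (w * ?D) * v * cnj R)" for w
    by (simp add: algebra_simps)
  have "(wf s v + - v) * ?n = 2 * (R + wf s v * - v * cnj R)
      \<longleftrightarrow> ((wf s v + - v) * ?n - 2 * (R + wf s v * - v * cnj R)) * ?D = 0"
    using D by simp
  also have "\<dots> \<longleftrightarrow> 2 * v * of_real (2 * Re (alf s R * v) - 2 * ccf s R) = 0"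
    unfolding i1 wD key_poly[OF V] ..
  also have "\<dots> \<longleftrightarrow> 2 * Re (alf s R * v) - 2 * ccf s R = 0"
    using v0 by (simp only: mult_eq_0_iff of_real_eq_0_iff) simp
  also have "\<dots> \<longleftrightarrow> Re (alf s R * v) = ccf s R" by auto
  finally show ?thesis .
qed



definition S0 :: "real \<Rightarrow> complex \<Rightarrow> complex set" where
  "S0 s R = {v. cmod v = 1 \<and> Re (alf s R * v) = ccf s R}"

lemma n_gt: fixes s :: real assumes "0 < s" "s < 1" shows "1 + s^2 > 2 * s"
proof -
  have "(1-s)^2 > 0" using assms by simp
  then show ?thesis by (simp add: power2_diff)
qed

lemma wf_ne: assumes s: "0 < s" "s < 1" and v: "cmod v = 1" shows "wf s v \<noteq> v"
proof
  let ?D = "of_real (1+s^2) - of_real (2 * s) * v :: complex"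
  let ?N = "of_real (2 * s) - v * of_real (1+s^2) :: complex"
  assume h: "wf s v = v"
  have D: "?D \<noteq> 0" using den_wf[OF s v] .
  have "?N = v * ?D" using h D unfolding wf_def by (simp add: divide_eq_eq)
  then have z: "(?N - v * ?D) * cnj v = 0" by simp
  have V: "(Re v)^2 + (Im v)^2 = 1" using unit_sq[OF v] .
  have E: "(?N - v * ?D) * cnj v = of_real (4 * s * Re v - 2 * (1 + s^2))"
  proof (rule complex_eqI)
    show "Re ((?N - v * ?D) * cnj v) = Re (of_real (4 * s * Re v - 2 * (1 + s^2)) :: complex)"
      using V by (simp add: power2_eq_square) algebra
    show "Im ((?N - v * ?D) * cnj v) = Im (of_real (4 * s * Re v - 2 * (1 + s^2)) :: complex)"
      using V by (simp add: power2_eq_square) algebra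
  qed
  have "(of_real (4 * s * Re v - 2 * (1 + s^2)) :: complex) = 0" using E z by metis
  then have "4 * s * Re v - 2 * (1 + s^2) = 0" by (simp only: of_real_eq_0_iff)
  then have "4 * s * Re v = 2 * (1 + s^2)" by simp
  moreover have "Re v \<le> 1" using complex_Re_le_cmod[of v] v by simp
  then have "4 * s * Re v \<le> 4 * s" using s by simp
  ultimately have "2 * (1 + s^2) \<le> 4 * s" by simp
  then show False using n_gt[OF s] by simp
qed

lemma wf_neg: assumes s: "0 < s" "s < 1" and v: "cmod v = 1" and h: "wf s v = - v" shows "v = 1 \<or> v = -1"
proof -
  let ?D = "of_real (1+s^2) - of_real (2 * s) * v :: complex"
  let ?N = "of_real (2 * s) - v * of_real (1+s^2) :: complex"
  have D: "?D \<noteq> 0" using den_wf[OF s v] .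
  have "?N = - v * ?D" using h D unfolding wf_def by (simp add: divide_eq_eq)
  then have "of_real (2 * s) * (1 - v * v) = 0" by (simp add: algebra_simps)
  then have "1 - v * v = 0" using s by simp
  then have "(v - 1) * (v + 1) = 0" by (simp add: algebra_simps)
  then show ?thesis by (simp add: eq_neg_iff_add_eq_0)
qed

lemma S0_not_pm1: assumes s: "0 < s" "s < 1" and R: "cmod R < 1" and v: "v \<in> S0 s R"
  shows "v \<noteq> 1" "v \<noteq> -1"
proof -
  have x: "\<bar>Re R\<bar> < 1" using abs_Re_le_cmod[of R] R by linarith
  have nR: "(cmod R)^2 = (Re R)^2 + (Im R)^2" by (simp add: cmod_power2)
  have p1: "1 + (cmod R)^2 + 2 * Re R > 0"
  proof -
    have "(1 + Re R)^2 > 0" using x by simp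
    moreover have "1 + (cmod R)^2 + 2 * Re R = (1 + Re R)^2 + (Im R)^2"
      unfolding nR by (simp add: power2_eq_square algebra_simps)
    ultimately show ?thesis by (simp add: add_pos_nonneg)
  qed
  have p2: "1 + (cmod R)^2 - 2 * Re R > 0"
  proof -
    have "(1 - Re R)^2 > 0" using x by simp
    moreover have "1 + (cmod R)^2 - 2 * Re R = (1 - Re R)^2 + (Im R)^2"
      unfolding nR by (simp add: power2_eq_square algebra_simps)
    ultimately show ?thesis by (simp add: add_pos_nonneg)
  qed
  have ng: "1 + s^2 - 2 * s > 0" using n_gt[OF s] by simp
  have ng2: "1 + s^2 + 2 * s > 0" using s by (simp add: add_pos_nonneg)
  show "v \<noteq> 1"
  proof
    assume "v = 1"
    then have "Re (alf s R) = ccf s R" using v unfolding S0_def by simp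
    then have "(1 + s^2 - 2 * s) * (1 + (cmod R)^2 + 2 * Re R) = 0"
      unfolding alf_def ccf_def by (simp add: algebra_simps)
    then show False using ng p1 by simp
  qed
  show "v \<noteq> -1"
  proof
    assume "v = -1"
    then have "- Re (alf s R) = ccf s R" using v unfolding S0_def by simp
    then have "(1 + s^2 + 2 * s) * (1 + (cmod R)^2 - 2 * Re R) = 0"
      unfolding alf_def ccf_def by (simp add: algebra_simps)
    then show False using ng2 p2 by simp
  qed
qed

lemma wf_neg_ne: assumes s: "0 < s" "s < 1" and v: "cmod v = 1" shows "wf s (- v) \<noteq> wf s v"
proof
  let ?D = "of_real (1+s^2) - of_real (2 * s) * v :: complex"
  let ?N = "of_real (2 * s) - v * of_real (1+s^2) :: complex"
  let ?D' = "of_real (1+s^2) - of_real (2 * s) * (-v) :: complex"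
  let ?N' = "of_real (2 * s) - (-v) * of_real (1+s^2) :: complex"
  assume h: "wf s (- v) = wf s v"
  have D: "?D \<noteq> 0" using den_wf[OF s v] .
  have mv: "cmod (- v) = 1" using v by simp
  have D': "?D' \<noteq> 0" using den_wf[OF s mv] .
  have "?N' * ?D = ?N * ?D'" using h D D' unfolding wf_def by (simp add: frac_eq_eq)
  moreover have "?N' * ?D - ?N * ?D' = 2 * v * of_real ((1+s^2)^2 - 4 * s^2)"
  proof (rule complex_eqI)
    show "Re (?N' * ?D - ?N * ?D') = Re (2 * v * of_real ((1+s^2)^2 - 4 * s^2))"
      by (simp add: power2_eq_square) algebra
    show "Im (?N' * ?D - ?N * ?D') = Im (2 * v * of_real ((1+s^2)^2 - 4 * s^2))"
      by (simp add: power2_eq_square) algebra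
  qed
  ultimately have "2 * v * of_real ((1+s^2)^2 - 4 * s^2) = 0" by simp
  moreover have v0: "v \<noteq> 0" using v by auto
  ultimately have "(of_real ((1+s^2)^2 - 4 * s^2) :: complex) = 0" by (simp only: mult_eq_0_iff) simp
  then have "(1+s^2)^2 - 4 * s^2 = 0" by (simp only: of_real_eq_0_iff)
  moreover have "(1+s^2)^2 - 4 * s^2 = (1 - s^2)^2" by (simp add: power2_eq_square algebra_simps)
  moreover have "(1 - s^2)^2 > 0"
  proof -
    have "s^2 < 1" using s abs_square_less_1[of s] by simp
    then show ?thesis by simp
  qed
  ultimately show False by simp
qed



definition tri :: "real \<Rightarrow> complex \<Rightarrow> complex set" where
  "tri s v = {- v, v, wf s v}"

lemma circ_norm:
  assumes s: "0 < s" "s < 1" and R: "cmod R < 1"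
  shows "circ_ideal_triangles 0 (of_real s) R = tri s ` S0 s R"
proof (intro set_eqI iffI)
  fix X assume "X \<in> circ_ideal_triangles 0 (of_real s) R"
  then obtain u v w where X: "X = {u, v, w}" and uvw: "cmod u = 1" "cmod v = 1" "cmod w = 1"
    "u \<noteq> v" "v \<noteq> w" "u \<noteq> w" and h1: "0 \<in> hline u v" and h2: "of_real s \<in> hline v w"
    and h3: "R \<in> hline w u"
    unfolding circ_ideal_triangles_def by blast
  have "(u + v) * (1 + of_real ((cmod (0::complex))^2)) = 2 * (0 + u * v * cnj 0)"
    using h1 unfolding hline_E[OF uvw(1,2,4)] by blast
  then have u: "u = - v" by (simp add: eq_neg_iff_add_eq_0)
  have "(v + w) * (1 + of_real ((cmod (of_real s :: complex))^2)) = 2 * (of_real s + v * w * cnj (of_real s))"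
    using h2 unfolding hline_E[OF uvw(2,3,5)] by blast
  then have w: "w = wf s v" using wf_char[OF s uvw(2)] by blast
  have "(w + u) * (1 + of_real ((cmod R)^2)) = 2 * (R + w * u * cnj R)"
    using h3 unfolding hline_E[OF uvw(3) uvw(1) uvw(6)[symmetric]] by blast
  then have "(wf s v + - v) * (1 + of_real ((cmod R)^2)) = 2 * (R + wf s v * - v * cnj R)"
    unfolding u w .
  then have "v \<in> S0 s R" unfolding S0_def using key_eq[OF s uvw(2)] uvw(2) by blast
  moreover have "X = tri s v" unfolding X tri_def u w ..
  ultimately show "X \<in> tri s ` S0 s R" by blast
next
  fix X assume "X \<in> tri s ` S0 s R"
  then obtain v where v: "v \<in> S0 s R" and X: "X = tri s v" by blast
  have v1: "cmod v = 1" using v unfolding S0_def by simp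
  have key: "Re (alf s R * v) = ccf s R" using v unfolding S0_def by simp
  have w1: "cmod (wf s v) = 1" using wf_unit[OF s v1] .
  have mv1: "cmod (- v) = 1" using v1 by simp
  have d1: "- v \<noteq> v" using v1 by (auto simp: minus_equation_iff)
  have d2: "v \<noteq> wf s v" using wf_ne[OF s v1] by simp
  have d3: "- v \<noteq> wf s v" using wf_neg[OF s v1] S0_not_pm1[OF s R v] by metis
  have e1: "0 \<in> hline (- v) v" unfolding hline_E[OF mv1 v1 d1] PDisk_def by simp
  have e2: "of_real s \<in> hline v (wf s v)" unfolding hline_E[OF v1 w1 d2] PDisk_def
    using wf_char[OF s v1, of "wf s v"] s by simp
  have e3: "R \<in> hline (wf s v) (- v)" unfolding hline_E[OF w1 mv1 d3[symmetric]] PDisk_def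
    using key_eq[OF s v1, of R] key R by simp
  show "X \<in> circ_ideal_triangles 0 (of_real s) R"
    unfolding circ_ideal_triangles_def X tri_def
    using mv1 v1 w1 d1 d2 d3 e1 e2 e3 by blast
qed

lemma tri_inj:
  assumes s: "0 < s" "s < 1" and R: "cmod R < 1"
  shows "inj_on (tri s) (S0 s R)"
proof (rule inj_onI)
  fix v1 v2 assume v1: "v1 \<in> S0 s R" and v2: "v2 \<in> S0 s R" and eq: "tri s v1 = tri s v2"
  have u1: "cmod v1 = 1" using v1 unfolding S0_def by simp
  have u2: "cmod v2 = 1" using v2 unfolding S0_def by simp
  have a1: "wf s v1 \<noteq> v1" "wf s v1 \<noteq> - v1" using wf_ne[OF s u1] wf_neg[OF s u1] S0_not_pm1[OF s R v1] by metis+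
  have a2: "wf s v2 \<noteq> v2" "wf s v2 \<noteq> - v2" using wf_ne[OF s u2] wf_neg[OF s u2] S0_not_pm1[OF s R v2] by metis+
  have nz1: "v1 \<noteq> - v1" using u1 by (auto simp: minus_equation_iff)
  have anti: "{x \<in> tri s v. - x \<in> tri s v} = {v, - v}"
    if "wf s v \<noteq> v" "wf s v \<noteq> - v" "wf s v \<noteq> 0" for v
    using that unfolding tri_def by (auto simp: minus_equation_iff)
  have w1: "wf s v1 \<noteq> 0" using wf_unit[OF s u1] by auto
  have w2: "wf s v2 \<noteq> 0" using wf_unit[OF s u2] by auto
  have "{v1, - v1} = {v2, - v2}" using anti[OF a1 w1] anti[OF a2 w2] eq by simp
  then have c: "v2 = v1 \<or> v2 = - v1" by (auto simp: doubleton_eq_iff)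
  show "v1 = v2"
  proof (rule ccontr)
    assume ne: "v1 \<noteq> v2"
    then have v2m: "v2 = - v1" using c by simp
    have "wf s v2 \<in> tri s v1" using eq unfolding tri_def by auto
    then have "wf s v2 = - v1 \<or> wf s v2 = v1 \<or> wf s v2 = wf s v1" unfolding tri_def by auto
    moreover have "wf s v2 \<noteq> - v1" using a2 v2m by simp
    moreover have "wf s v2 \<noteq> v1" using a2 v2m by simp
    moreover have "wf s (- v1) \<noteq> wf s v1" using wf_neg_ne[OF s u1] .
    ultimately show False using v2m by simp
  qed
qed

lemma card_norm:
  assumes s: "0 < s" "s < 1" and R: "cmod R < 1"
  shows "(F0 s R > 0 \<longrightarrow> circ_ideal_triangles 0 (of_real s) R = {})
    \<and> (F0 s R = 0 \<longrightarrow> finite (circ_ideal_triangles 0 (of_real s) R) \<and> card (circ_ideal_triangles 0 (of_real s) R) = 1)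
    \<and> (F0 s R < 0 \<longrightarrow> finite (circ_ideal_triangles 0 (of_real s) R) \<and> card (circ_ideal_triangles 0 (of_real s) R) = 2)"
proof -
  have cp: "ccf s R > 0" using ccf_pos[OF s] .
  have id: "(2 * ccf s R)^2 - 4 * (cmod (alf s R))^2 = F0 s R" using F0_identity .
  have c: "circ_ideal_triangles 0 (of_real s) R = tri s ` S0 s R" using circ_norm[OF s R] .
  have inj: "inj_on (tri s) (S0 s R)" using tri_inj[OF s R] .
  have cardeq: "card (circ_ideal_triangles 0 (of_real s) R) = card (S0 s R)" unfolding c using card_image[OF inj] .
  have fin: "finite (circ_ideal_triangles 0 (of_real s) R) \<longleftrightarrow> finite (S0 s R)" unfolding c using finite_image_iff[OF inj] .
  have tw: "(2 * ccf s R)^2 = 4 * (ccf s R)^2" by (simp add: power2_eq_square)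
  have id': "4 * (ccf s R)^2 - 4 * (cmod (alf s R))^2 = F0 s R" using id tw by linarith
  show ?thesis
  proof (rule conjI[OF impI conjI[OF impI impI]])
    assume "F0 s R > 0"
    then have "(cmod (alf s R))^2 < (ccf s R)^2" using id' by linarith
    moreover have "0 \<le> ccf s R" using cp by simp
    ultimately have "cmod (alf s R) < ccf s R" by (rule power2_less_imp_less)
    then have "S0 s R = {}" unfolding S0_def by (rule circle_sol_none)
    then show "circ_ideal_triangles 0 (of_real s) R = {}" unfolding c by simp
  next
    assume "F0 s R = 0"
    then have "(cmod (alf s R))^2 = (ccf s R)^2" using id' by linarith
    then have "cmod (alf s R) = ccf s R" using cp by (simp add: power2_eq_iff_nonneg)
    then have "S0 s R = {cnj (alf s R) / of_real (ccf s R)}" unfolding S0_def using circle_sol_one[OF _ cp] by blast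
    then show "finite (circ_ideal_triangles 0 (of_real s) R) \<and> card (circ_ideal_triangles 0 (of_real s) R) = 1"
      using fin cardeq by simp
  next
    assume "F0 s R < 0"
    then have "(cmod (alf s R))^2 > (ccf s R)^2" using id' by linarith
    moreover have "0 \<le> cmod (alf s R)" by simp
    ultimately have "cmod (alf s R) > ccf s R" by (rule power2_less_imp_less)
    then have c2: "card (S0 s R) = 2" unfolding S0_def using circle_sol_two[OF _ cp] by blast
    then have "finite (S0 s R)" by (intro card_ge_0_finite) simp
    then show "finite (circ_ideal_triangles 0 (of_real s) R) \<and> card (circ_ideal_triangles 0 (of_real s) R) = 2"
      using fin cardeq c2 by simp
  qed
qed



lemma mob_inj:
  assumes l: "cmod l = 1" and c: "cmod c < 1" and a: "cmod a \<le> 1" and b: "cmod b \<le> 1"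
    and e: "mob l c a = mob l c b" shows "a = b"
proof -
  have "a = mob (cnj l) (-(l*c)) (mob l c a)" using mob_inv[OF l c den_nz[OF c a]] by simp
  also have "\<dots> = mob (cnj l) (-(l*c)) (mob l c b)" using e by simp
  also have "\<dots> = b" using mob_inv[OF l c den_nz[OF c b]] by simp
  finally show ?thesis .
qed

lemma inv_params: assumes l: "cmod l = 1" and c: "cmod c < 1"
  shows "cmod (cnj l) = 1" "cmod (-(l*c)) < 1"
  using l c by (simp_all add: norm_mult)

lemma mob_hline:
  assumes l: "cmod l = 1" and c: "cmod c < 1" and a: "cmod a = 1" and b: "cmod b = 1"
    and z: "z \<in> hline a b"
  shows "mob l c z \<in> hline (mob l c a) (mob l c b)"
proof -
  have "mob l c z \<in> arcs_gen (mob l c a) (mob l c b) 0"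
    using mob_arcs[OF l c a b] z unfolding hline_gen[OF a] by blast
  then show ?thesis unfolding hline_gen[OF mob_circle[OF l c a]] .
qed

lemma mob_circ:
  assumes l: "cmod l = 1" and c: "cmod c < 1" and X: "X \<in> circ_ideal_triangles P Q R"
  shows "mob l c ` X \<in> circ_ideal_triangles (mob l c P) (mob l c Q) (mob l c R)"
proof -
  obtain u v w where Xe: "X = {u, v, w}" and uvw: "cmod u = 1" "cmod v = 1" "cmod w = 1"
    "u \<noteq> v" "v \<noteq> w" "u \<noteq> w" and h1: "P \<in> hline u v" and h2: "Q \<in> hline v w"
    and h3: "R \<in> hline w u"
    using X unfolding circ_ideal_triangles_def by blast
  let ?f = "mob l c"
  have im: "?f ` X = {?f u, ?f v, ?f w}" unfolding Xe by simp
  have n1: "?f u \<noteq> ?f v" using mob_inj[OF l c, of u v] uvw by auto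
  have n2: "?f v \<noteq> ?f w" using mob_inj[OF l c, of v w] uvw by auto
  have n3: "?f u \<noteq> ?f w" using mob_inj[OF l c, of u w] uvw by auto
  have m: "cmod (?f u) = 1" "cmod (?f v) = 1" "cmod (?f w) = 1"
    using mob_circle[OF l c] uvw by auto
  have k1: "?f P \<in> hline (?f u) (?f v)" using mob_hline[OF l c uvw(1,2) h1] .
  have k2: "?f Q \<in> hline (?f v) (?f w)" using mob_hline[OF l c uvw(2,3) h2] .
  have k3: "?f R \<in> hline (?f w) (?f u)" using mob_hline[OF l c uvw(3,1) h3] .
  show ?thesis unfolding circ_ideal_triangles_def im
    using n1 n2 n3 m k1 k2 k3 by blast
qed

lemma circ_sub_circle: "X \<in> circ_ideal_triangles P Q R \<Longrightarrow> x \<in> X \<Longrightarrow> cmod x = 1"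
  unfolding circ_ideal_triangles_def by auto

lemma mob_circ_bij:
  assumes l: "cmod l = 1" and c: "cmod c < 1"
    and P: "cmod P < 1" and Q: "cmod Q < 1" and R: "cmod R < 1"
  shows "bij_betw (\<lambda>X. mob l c ` X) (circ_ideal_triangles P Q R)
           (circ_ideal_triangles (mob l c P) (mob l c Q) (mob l c R))"
proof -
  let ?f = "mob l c" and ?g = "mob (cnj l) (-(l*c))"
  have l': "cmod (cnj l) = 1" and c': "cmod (-(l*c)) < 1" using inv_params[OF l c] by auto
  have gf: "?g (?f x) = x" if "cmod x \<le> 1" for x using mob_inv[OF l c den_nz[OF c that]] .
  have fg: "?f (?g y) = y" if "cmod y \<le> 1" for y
  proof -
    have ll: "cnj l * l = 1" using l complex_norm_square[of l] by (simp add: mult.commute)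
    have e: "-(cnj l * -(l*c)) = c" using ll by (simp add: mult.assoc[symmetric])
    have "mob (cnj (cnj l)) (-(cnj l * -(l*c))) (?g y) = y" using mob_inv[OF l' c' den_nz[OF c' that]] .
    then show ?thesis unfolding e complex_cnj_cnj .
  qed
  have gP: "?g (?f P) = P" using gf P by simp
  have gQ: "?g (?f Q) = Q" using gf Q by simp
  have gR: "?g (?f R) = R" using gf R by simp
  show ?thesis
  proof (rule bij_betwI[where g = "\<lambda>Y. ?g ` Y"])
    show "(\<lambda>X. ?f ` X) \<in> circ_ideal_triangles P Q R \<rightarrow> circ_ideal_triangles (?f P) (?f Q) (?f R)"
      using mob_circ[OF l c] by blast
    show "(\<lambda>Y. ?g ` Y) \<in> circ_ideal_triangles (?f P) (?f Q) (?f R) \<rightarrow> circ_ideal_triangles P Q R"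
      using mob_circ[OF l' c', of _ "?f P" "?f Q" "?f R"] unfolding gP gQ gR by blast
    show "?g ` (?f ` X) = X" if "X \<in> circ_ideal_triangles P Q R" for X
    proof -
      have "?g ` (?f ` X) = (\<lambda>x. ?g (?f x)) ` X" by (simp add: image_image)
      also have "\<dots> = (\<lambda>x. x) ` X" using gf circ_sub_circle[OF that] by (intro image_cong) auto
      also have "\<dots> = X" by simp
      finally show ?thesis .
    qed
    show "?f ` (?g ` Y) = Y" if "Y \<in> circ_ideal_triangles (?f P) (?f Q) (?f R)" for Y
    proof -
      have "?f ` (?g ` Y) = (\<lambda>x. ?f (?g x)) ` Y" by (simp add: image_image)
      also have "\<dots> = (\<lambda>x. x) ` Y" using fg circ_sub_circle[OF that] by (intro image_cong) auto
      also have "\<dots> = Y" by simp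
      finally show ?thesis .
    qed
  qed
qed

lemma mob_angle_arcs:
  assumes l: "cmod l = 1" and c: "cmod c < 1" and a: "cmod a = 1" and b: "cmod b = 1"
    and al: "0 \<le> \<alpha>" "\<alpha> \<le> pi" and z: "cmod z < 1"
  shows "z \<in> angle_arcs a b \<alpha> \<longleftrightarrow> mob l c z \<in> angle_arcs (mob l c a) (mob l c b) \<alpha>"
proof -
  let ?f = "mob l c" and ?g = "mob (cnj l) (-(l*c))"
  have l': "cmod (cnj l) = 1" and c': "cmod (-(l*c)) < 1" using inv_params[OF l c] by auto
  have fa: "cmod (?f a) = 1" and fb: "cmod (?f b) = 1" using mob_circle[OF l c] a b by auto
  have gf: "?g (?f x) = x" if "cmod x \<le> 1" for x using mob_inv[OF l c den_nz[OF c that]] .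
  show ?thesis
  proof
    assume "z \<in> angle_arcs a b \<alpha>"
    then show "?f z \<in> angle_arcs (?f a) (?f b) \<alpha>"
      using mob_arcs[OF l c a b] unfolding angle_arcs_gen[OF a b al] angle_arcs_gen[OF fa fb al] by blast
  next
    assume "?f z \<in> angle_arcs (?f a) (?f b) \<alpha>"
    then have "?g (?f z) \<in> arcs_gen (?g (?f a)) (?g (?f b)) (cos \<alpha>)"
      using mob_arcs[OF l' c' fa fb] unfolding angle_arcs_gen[OF fa fb al] by blast
    then show "z \<in> angle_arcs a b \<alpha>" unfolding angle_arcs_gen[OF a b al]
      using gf a b z by simp
  qed
qed



lemma s2_lt: fixes s :: real assumes "0 < s" "s < 1" shows "s^2 < 1" "0 < 1 - s^2"
  using assms abs_square_less_1[of s] by auto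

lemma exp_hd: fixes s :: real assumes s: "0 < s" "s < 1"
  shows "exp (arcosh (1 + 2 * s^2 / (1 - s^2))) = (1+s) / (1-s)"
proof -
  define d where "d = 1 - s^2"
  have p: "0 < d" using s2_lt[OF s] d_def by simp
  have sd: "s^2 = 1 - d" unfolding d_def by simp
  define Ch where "Ch = 1 + 2 * s^2 / (1 - s^2)"
  have Ch: "Ch = (2 - d) / d" unfolding Ch_def d_def[symmetric] sd using p by (simp add: field_simps)
  have d1: "d \<le> 1" unfolding d_def by simp
  have Ch1: "Ch \<ge> 1" unfolding Ch using p d1 by (simp add: field_simps)
  have sd': "s * s = 1 - d" using sd by (simp add: power2_eq_square)
  have chs: "Ch^2 - 1 = (2 * s / d)^2" unfolding Ch using p by (simp add: field_simps power2_eq_square) (use sd' in algebra)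
  have sq: "sqrt (Ch^2 - 1) = 2 * s / d" by (rule real_sqrt_unique[OF chs[symmetric]]) (use p s in simp)
  have "Ch + sqrt (Ch^2 - 1) = (2 - d + 2 * s) / d" unfolding sq unfolding Ch using p by (simp add: field_simps)
  also have "\<dots> = (1+s) / (1-s)"
  proof -
    have "1 - s \<noteq> 0" using s by simp
    then show ?thesis using p unfolding d_def by (simp add: field_simps power2_eq_square)
  qed
  finally have e: "Ch + sqrt (Ch^2 - 1) = (1+s) / (1-s)" .
  have "(1+s) / (1-s) > 0" using s by simp
  then show ?thesis unfolding Ch_def[symmetric] arcosh_real_def[OF Ch1] e by simp
qed

lemma alpha_facts: fixes t :: real assumes t: "1 \<le> t"
  shows "cos (2 * arctan t - pi / 2) = 2 * t / (1 + t^2)"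
    "0 \<le> 2 * arctan t - pi / 2" "2 * arctan t - pi / 2 \<le> pi"
proof -
  have q: "sqrt (1 + t^2) * sqrt (1 + t^2) = 1 + t^2" by (simp add: add_pos_nonneg)
  have "cos (2 * arctan t - pi / 2) = sin (2 * arctan t)" by (simp add: cos_diff)
  also have "\<dots> = 2 * (t / sqrt (1 + t^2)) * (1 / sqrt (1 + t^2))" by (simp add: sin_double sin_arctan cos_arctan)
  also have "\<dots> = 2 * t / (1 + t^2)" using q by (simp add: field_simps)
  finally show "cos (2 * arctan t - pi / 2) = 2 * t / (1 + t^2)" .
  have "arctan 1 \<le> arctan t" by (subst arctan_le_iff) (rule t)
  then have "pi / 4 \<le> arctan t" unfolding arctan_one .
  then show "0 \<le> 2 * arctan t - pi / 2" by linarith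
  show "2 * arctan t - pi / 2 \<le> pi" using arctan_ubound[of t] pi_gt_zero by linarith
qed

lemma frac_lemma: fixes u v :: real assumes "u \<noteq> 0" "u^2 + v^2 \<noteq> 0"
  shows "2 * (v / u) / (1 + (v / u)^2) = 2 * v * u / (u^2 + v^2)"
proof -
  have "1 + (v / u)^2 = (u^2 + v^2) / u^2" using assms(1) by (simp add: field_simps)
  then have "2 * (v / u) / (1 + (v / u)^2) = 2 * (v / u) * u^2 / (u^2 + v^2)" using assms by simp
  also have "\<dots> = 2 * v * u / (u^2 + v^2)" using assms(1) by (simp add: power2_eq_square)
  finally show ?thesis .
qed

lemma cos_alpha_s: fixes s :: real assumes s: "0 < s" "s < 1"
  shows "cos (2 * arctan (exp (arcosh (1 + 2 * s^2 / (1 - s^2)))) - pi / 2) = (1 - s^2) / (1 + s^2)"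
    "0 \<le> 2 * arctan (exp (arcosh (1 + 2 * s^2 / (1 - s^2)))) - pi / 2"
    "2 * arctan (exp (arcosh (1 + 2 * s^2 / (1 - s^2)))) - pi / 2 \<le> pi"
proof -
  have t1: "1 \<le> (1+s)/(1-s)" using s by simp
  show "cos (2 * arctan (exp (arcosh (1 + 2 * s^2 / (1 - s^2)))) - pi / 2) = (1 - s^2) / (1 + s^2)"
    unfolding exp_hd[OF s] alpha_facts(1)[OF t1]
  proof -
    have a1: "1 - s \<noteq> 0" using s by simp
    have a2: "1 + s^2 \<noteq> 0" using zero_le_power2[of s] by linarith
    have a3: "(1 - s)^2 + (1+s)^2 \<noteq> 0" using zero_le_power2[of "1-s"] s by (smt (verit) zero_less_power2)
    note a = a1 a2 a3
    have "2 * ((1 + s) / (1 - s)) / (1 + ((1 + s) / (1 - s))^2) = 2 * (1+s) * (1-s) / ((1 - s)^2 + (1+s)^2)"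
      using frac_lemma[OF a1 a3] by simp
    also have "\<dots> = (1 - s^2) / (1 + s^2)" using a by (simp add: field_simps power2_eq_square)
    finally show "2 * ((1 + s) / (1 - s)) / (1 + ((1 + s) / (1 - s))^2) = (1 - s^2) / (1 + s^2)" .
  qed
  show "0 \<le> 2 * arctan (exp (arcosh (1 + 2 * s^2 / (1 - s^2)))) - pi / 2"
    unfolding exp_hd[OF s] using alpha_facts(2)[OF t1] .
  show "2 * arctan (exp (arcosh (1 + 2 * s^2 / (1 - s^2)))) - pi / 2 \<le> pi"
    unfolding exp_hd[OF s] using alpha_facts(3)[OF t1] .
qed



lemma normalize:
  assumes P: "cmod P < 1" and Q: "cmod Q < 1" and PQ: "P \<noteq> Q"
  obtains l s where "cmod l = 1" "0 < s" "s < 1" "mob l P P = 0" "mob l P Q = of_real s"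
    "(cmod (P - Q))^2 / ((1 - (cmod P)^2) * (1 - (cmod Q)^2)) = s^2 / (1 - s^2)"
proof -
  let ?d = "1 - cnj P * Q"
  have d: "?d \<noteq> 0" using den_nz[OF P] Q by simp
  define q where "q = mob 1 P Q"
  have q0: "q \<noteq> 0" unfolding q_def mob_def using d PQ by simp
  have q1: "cmod q < 1" unfolding q_def using mob_disk[of 1 P Q] P Q by simp
  define s where "s = cmod q"
  have s: "0 < s" "s < 1" using q0 q1 s_def by auto
  define l where "l = cnj q / of_real s"
  have l: "cmod l = 1" unfolding l_def s_def using q0 by (simp add: norm_divide)
  have mq: "mob l P Q = l * q" unfolding q_def mob_def by simp
  have "l * q = of_real s"
  proof -
    have "l * q = (q * cnj q) / of_real s" unfolding l_def by (simp add: mult.commute)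
    also have "\<dots> = of_real (s^2) / of_real s" unfolding s_def complex_norm_square[symmetric] ..
    also have "\<dots> = of_real s" using s by (simp add: power2_eq_square)
    finally show ?thesis .
  qed
  then have m2: "mob l P Q = of_real s" using mq by simp
  have m1: "mob l P P = 0" unfolding mob_def by simp
  have om: "1 - s^2 = (1 - (cmod P)^2) * (1 - (cmod Q)^2) / (cmod ?d)^2"
    using one_minus_mob[of 1 P Q] d unfolding s_def q_def by simp
  have sq: "s^2 = (cmod (Q - P))^2 / (cmod ?d)^2"
    unfolding s_def q_def mob_def by (simp add: norm_divide power_divide)
  have dp: "(cmod ?d)^2 > 0" using d by simp
  have pp: "(1 - (cmod P)^2) * (1 - (cmod Q)^2) > 0" using P Q by (simp add: abs_square_less_1)
  have "s^2 / (1 - s^2) = (cmod (Q - P))^2 / ((1 - (cmod P)^2) * (1 - (cmod Q)^2))"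
    unfolding om unfolding sq using dp pp by (simp add: field_simps)
  also have "\<dots> = (cmod (P - Q))^2 / ((1 - (cmod P)^2) * (1 - (cmod Q)^2))" by (simp add: norm_minus_commute)
  finally show ?thesis using that l s m1 m2 by metis
qed

lemma T_pm1:
  assumes s: "0 < s" "s < 1" and a: "cmod a = 1" and b: "cmod b = 1" and ab: "a \<noteq> b"
    and h0: "0 \<in> hline a b" and hs: "of_real s \<in> hline a b"
  shows "(a = 1 \<and> b = -1) \<or> (a = -1 \<and> b = 1)"
proof -
  have "(a + b) * (1 + of_real ((cmod (0::complex))^2)) = 2 * (0 + a * b * cnj 0)"
    using h0 unfolding hline_E[OF a b ab] by blast
  then have b': "b = - a" by (simp add: eq_neg_iff_add_eq_0 add.commute)
  have "(a + b) * (1 + of_real ((cmod (of_real s :: complex))^2)) = 2 * (of_real s + a * b * cnj (of_real s))"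
    using hs unfolding hline_E[OF a b ab] by blast
  then have "of_real s * (1 - a * a) = 0" unfolding b' by (simp add: algebra_simps)
  then have "1 - a * a = 0" using s by simp
  then have "(a - 1) * (a + 1) = 0" by (simp add: algebra_simps)
  then have "a = 1 \<or> a = -1" by (simp add: eq_neg_iff_add_eq_0)
  then show ?thesis using b' by auto
qed

lemma angle_arcs_sym: "angle_arcs a b \<alpha> = angle_arcs b a \<alpha>"
  unfolding angle_arcs_def by blast

lemma carcs_norm:
  assumes s: "0 < s" "s < 1"
  shows "arcs_gen 1 (-1) ((1 - s^2) / (1 + s^2)) = {z \<in> PDisk. F0 s z = 0}"
proof (intro set_eqI iffI)
  have sp: "0 < 1 - s^2" "0 < 1 + s^2" using s2_lt[OF s] zero_le_power2[of s] by linarith+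
  fix z assume "z \<in> arcs_gen 1 (-1) ((1 - s^2) / (1 + s^2))"
  then obtain A B C where zd: "z \<in> PDisk" and nd: "gcircle_nondeg A B C" and g1: "1 \<in> gcircle A B C"
    and g2: "-1 \<in> gcircle A B C" and gz: "z \<in> gcircle A B C"
    and r: "\<bar>A - C\<bar> = (1 - s^2) / (1 + s^2) * sqrt ((cmod B)^2 - 4*A*C)"
    unfolding arcs_gen_def by blast
  have e1: "A + Re B + C = 0" using g1 unfolding gcircle_def by simp
  have e2: "A - Re B + C = 0" using g2 unfolding gcircle_def by simp
  have ReB: "Re B = 0" and CA: "C = - A" using e1 e2 by linarith+
  have nB: "(cmod B)^2 = (Im B)^2" using ReB by (simp add: cmod_power2)
  have D: "(cmod B)^2 - 4*A*C = (Im B)^2 + 4 * A^2" unfolding nB CA by (simp add: power2_eq_square)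
  have Dp: "(Im B)^2 + 4 * A^2 > 0" using nd unfolding gcircle_nondeg_def D[symmetric] by simp
  have r1: "\<bar>A - C\<bar> = (1 - s^2) / (1 + s^2) * sqrt ((Im B)^2 + 4 * A^2)" using r unfolding D .
  have r2: "\<bar>A - C\<bar> = \<bar>2 * A\<bar>" using CA by simp
  have "(1 + s^2) * \<bar>2 * A\<bar> = (1 - s^2) * sqrt ((Im B)^2 + 4 * A^2)"
    using r1 sp unfolding r2 by (simp add: field_simps)
  then have "((1 + s^2) * \<bar>2 * A\<bar>)^2 = ((1 - s^2) * sqrt ((Im B)^2 + 4 * A^2))^2" by simp
  then have er: "(1 + s^2)^2 * (4 * A^2) = (1 - s^2)^2 * ((Im B)^2 + 4 * A^2)"
    using Dp by (simp add: power_mult_distrib)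
  have ez: "A * (1 - (cmod z)^2) = Im B * Im z"
    using gz ReB CA unfolding gcircle_def by (simp add: algebra_simps)
  have A0: "A \<noteq> 0"
  proof
    assume "A = 0"
    then have "(1 - s^2)^2 * (Im B)^2 = 0" using er by simp
    then have "Im B = 0" using sp by simp
    then show False using Dp \<open>A = 0\<close> by simp
  qed
  have "A^2 * F0 s z = 0" using er ez unfolding F0_def by algebra
  then have "F0 s z = 0" using A0 by simp
  then show "z \<in> {z \<in> PDisk. F0 s z = 0}" using zd by simp
next
  have sp: "0 < 1 - s^2" "0 < 1 + s^2" using s2_lt[OF s] zero_le_power2[of s] by linarith+
  fix z assume "z \<in> {z \<in> PDisk. F0 s z = 0}"
  then have zd: "z \<in> PDisk" and F: "F0 s z = 0" by auto
  have z1: "0 < 1 - (cmod z)^2" using zd unfolding PDisk_def by (simp add: abs_square_less_1)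
  have "((1 - s^2) * (1 - (cmod z)^2))^2 = (4 * s * \<bar>Im z\<bar>)^2"
    using F unfolding F0_def by (simp add: power_mult_distrib power2_abs)
  then have k: "(1 - s^2) * (1 - (cmod z)^2) = 4 * s * \<bar>Im z\<bar>"
    using sp z1 s by (simp add: power2_eq_iff_nonneg)
  define b where "b = (if Im z \<ge> 0 then 4 * s else - 4 * s)"
  have bz: "b * Im z = 4 * s * \<bar>Im z\<bar>" unfolding b_def by auto
  have b2: "b^2 = 16 * s^2" unfolding b_def by (simp add: power2_eq_square)
  define A where "A = 1 - s^2"
  define B where "B = Complex 0 b"
  define C where "C = - (1 - s^2)"
  have nB: "(cmod B)^2 = b^2" unfolding B_def by (simp add: cmod_power2)
  have D: "(cmod B)^2 - 4*A*C = (2 * (1 + s^2))^2" unfolding nB b2 A_def C_def by (simp add: power2_eq_square algebra_simps)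
  have "(2 * (1 + s^2))^2 > 0" using sp by simp
  then have nd: "gcircle_nondeg A B C" unfolding gcircle_nondeg_def using D by linarith
  have g1: "1 \<in> gcircle A B C" unfolding gcircle_def A_def B_def C_def by simp
  have g2: "-1 \<in> gcircle A B C" unfolding gcircle_def A_def B_def C_def by simp
  have gz: "z \<in> gcircle A B C" unfolding gcircle_def A_def B_def C_def using k bz by (simp add: algebra_simps)
  have r: "\<bar>A - C\<bar> = (1 - s^2) / (1 + s^2) * sqrt ((cmod B)^2 - 4*A*C)"
    unfolding D unfolding A_def C_def using sp by (simp add: field_simps)
  show "z \<in> arcs_gen 1 (-1) ((1 - s^2) / (1 + s^2))" unfolding arcs_gen_def
    using zd nd g1 g2 gz r by blast
qed



lemma topo_generic:
  fixes G :: "complex \<Rightarrow> real"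
  assumes S: "open S" and cG: "continuous_on S G" and P: "P \<in> S" "G P > 0"
    and K: "\<And>z. z \<in> S \<Longrightarrow> (z \<in> K \<longleftrightarrow> G z = 0)"
    and conU: "connected {z \<in> S. G z > 0}"
    and clU: "\<And>z. z \<in> S \<Longrightarrow> G z = 0 \<Longrightarrow> z \<in> closure {z \<in> S. G z > 0}"
  shows "connected_component_set (S - K) P = {z \<in> S. G z > 0}"
    "\<And>z. z \<in> S \<Longrightarrow> z \<notin> closure (connected_component_set (S - K) P) \<Longrightarrow> G z < 0"
proof -
  let ?U = "{z \<in> S. G z > 0}"
  let ?C = "connected_component_set (S - K) P"
  have UK: "?U \<subseteq> S - K" using K by auto
  have PU: "P \<in> ?U" using P by simp
  have sub1: "?U \<subseteq> ?C" using connected_component_maximal[OF PU conU UK] .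
  have sub2: "?C \<subseteq> ?U"
  proof
    fix z assume z: "z \<in> ?C"
    have CS: "?C \<subseteq> S - K" by (rule connected_component_subset)
    have zS: "z \<in> S" "z \<notin> K" using z CS by auto
    have PC: "P \<in> ?C" using sub1 PU by blast
    have conGC: "connected (G ` ?C)"
      using connected_continuous_image[OF continuous_on_subset[OF cG] connected_connected_component] CS by blast
    show "z \<in> ?U"
    proof (rule ccontr)
      assume "z \<notin> ?U"
      then have "G z \<le> 0" using zS by simp
      moreover have "G z \<noteq> 0" using K zS by blast
      ultimately have "G z < 0" by simp
      then have "0 \<in> G ` ?C" using conGC z PC P(2) unfolding connected_iff_interval
        by (meson imageI less_imp_le)
      then obtain y where y: "y \<in> ?C" "G y = 0" by auto
      then have "y \<in> S" "y \<notin> K" using CS by auto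
      then show False using K y(2) by blast
    qed
  qed
  show eq: "?C = ?U" using sub1 sub2 by blast
  fix z assume zS: "z \<in> S" and nz: "z \<notin> closure ?C"
  show "G z < 0"
  proof (rule ccontr)
    assume "\<not> G z < 0"
    then have "G z > 0 \<or> G z = 0" by auto
    then have "z \<in> closure ?U"
    proof (elim disjE)
      assume "G z > 0"
      then have "z \<in> ?U" using zS by simp
      then show ?thesis using closure_subset[of ?U] by blast
    next
      assume "G z = 0"
      then show ?thesis using clU[OF zS] by blast
    qed
    then show False using nz eq by simp
  qed
qed

lemma F0_sign:
  assumes s: "0 < s" "s < 1" and w: "cmod w < 1"
  shows "F0 s w > 0 \<longleftrightarrow> 4 * s * \<bar>Im w\<bar> < (1 - s^2) * (1 - (cmod w)^2)"
    "F0 s w = 0 \<longleftrightarrow> 4 * s * \<bar>Im w\<bar> = (1 - s^2) * (1 - (cmod w)^2)"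
proof -
  let ?a = "(1 - s^2) * (1 - (cmod w)^2)" and ?b = "4 * s * \<bar>Im w\<bar>"
  have a: "?a > 0" using s2_lt[OF s] w by (simp add: abs_square_less_1)
  have b: "?b \<ge> 0" using s by simp
  have f: "F0 s w = (?a - ?b) * (?a + ?b)" unfolding F0_def by (simp add: algebra_simps power2_eq_square)
  have ab: "?a + ?b > 0" using a b by simp
  show "F0 s w > 0 \<longleftrightarrow> ?b < ?a" unfolding f using ab by (simp add: zero_less_mult_iff)
  show "F0 s w = 0 \<longleftrightarrow> ?b = ?a" unfolding f using ab by auto
qed

lemma scale_in:
  assumes s: "0 < s" "s < 1" and w: "cmod w < 1"
    and h: "4 * s * \<bar>Im w\<bar> \<le> (1 - s^2) * (1 - (cmod w)^2)" and t: "0 \<le> t" "t < 1"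
  shows "cmod (of_real t * w) < 1" "4 * s * \<bar>Im (of_real t * w)\<bar> < (1 - s^2) * (1 - (cmod (of_real t * w))^2)"
proof -
  have n: "cmod (of_real t * w) = t * cmod w" using t by (simp add: norm_mult)
  have im: "\<bar>Im (of_real t * w)\<bar> = t * \<bar>Im w\<bar>" using t by (simp add: abs_mult)
  show "cmod (of_real t * w) < 1" unfolding n using t w
    by (metis le_less_trans mult_left_le_one_le norm_ge_zero less_imp_le)
  have sp: "0 < 1 - s^2" using s2_lt[OF s] by simp
  have r: "(cmod w)^2 < 1" using w by (simp add: abs_square_less_1)
  have key: "t * (1 - (cmod w)^2) < 1 - (t * cmod w)^2"
  proof -
    have "1 - (t * cmod w)^2 - t * (1 - (cmod w)^2) = (1 - t) * (1 + t * (cmod w)^2)"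
      by (simp add: algebra_simps power2_eq_square)
    moreover have "(1 - t) * (1 + t * (cmod w)^2) > 0" using t by (simp add: add_pos_nonneg)
    ultimately show ?thesis by linarith
  qed
  have "4 * s * (t * \<bar>Im w\<bar>) = t * (4 * s * \<bar>Im w\<bar>)" by simp
  also have "\<dots> \<le> t * ((1 - s^2) * (1 - (cmod w)^2))" using h t by (simp add: mult_left_mono)
  also have "\<dots> = (1 - s^2) * (t * (1 - (cmod w)^2))" by simp
  also have "\<dots> < (1 - s^2) * (1 - (t * cmod w)^2)" using key sp by simp
  finally show "4 * s * \<bar>Im (of_real t * w)\<bar> < (1 - s^2) * (1 - (cmod (of_real t * w))^2)"
    unfolding n im .
qed

lemma Pos_connected:
  assumes s: "0 < s" "s < 1"
  shows "connected {w \<in> PDisk. F0 s w > 0}"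
proof -
  let ?W = "{w \<in> PDisk. F0 s w > 0}"
  have mem: "w \<in> ?W \<longleftrightarrow> cmod w < 1 \<and> 4 * s * \<bar>Im w\<bar> < (1 - s^2) * (1 - (cmod w)^2)" for w
    using F0_sign(1)[OF s] unfolding PDisk_def by auto
  have "starlike ?W" unfolding starlike_def
  proof (intro bexI ballI)
    show "0 \<in> ?W" unfolding mem using s2_lt[OF s] by simp
    fix x assume x: "x \<in> ?W"
    show "closed_segment 0 x \<subseteq> ?W"
    proof
      fix y assume "y \<in> closed_segment 0 x"
      then obtain u where u: "0 \<le> u" "u \<le> 1" "y = u *\<^sub>R x" unfolding closed_segment_def by auto
      have y: "y = of_real u * x" using u(3) by (simp add: scaleR_conv_of_real)
      show "y \<in> ?W"
      proof (cases "u = 1")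
        case True then show ?thesis using x y by simp
      next
        case False
        then have u1: "u < 1" using u by simp
        have xd: "cmod x < 1" "4 * s * \<bar>Im x\<bar> < (1 - s^2) * (1 - (cmod x)^2)" using x mem by auto
        show ?thesis unfolding mem y using scale_in[OF s xd(1) less_imp_le[OF xd(2)] u(1) u1] by simp
      qed
    qed
  qed
  then show ?thesis by (rule starlike_imp_connected)
qed



lemma PDisk_ball: "PDisk = ball 0 1"
  unfolding PDisk_def by (auto simp: dist_norm)

lemma mob_cont: assumes c: "cmod c < 1" shows "continuous_on PDisk (mob l c)"
proof -
  have "continuous_on PDisk (\<lambda>z. l * (z - c) / (1 - cnj c * z))"
    by (intro continuous_intros) (use den_nz[OF c] in \<open>auto simp: PDisk_def\<close>)
  then show ?thesis unfolding mob_def[abs_def] .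
qed

lemma F0_cont: "continuous_on A (F0 s)"
  unfolding F0_def[abs_def] by (intro continuous_intros)

lemma mob_fg:
  assumes l: "cmod l = 1" and c: "cmod c < 1" and y: "cmod y \<le> 1"
  shows "mob l c (mob (cnj l) (-(l*c)) y) = y"
proof -
  have l': "cmod (cnj l) = 1" and c': "cmod (-(l*c)) < 1" using inv_params[OF l c] by auto
  have ll: "cnj l * l = 1" using l complex_norm_square[of l] by (simp add: mult.commute)
  have e: "-(cnj l * -(l*c)) = c" using ll by (simp add: mult.assoc[symmetric])
  have "mob (cnj (cnj l)) (-(cnj l * -(l*c))) (mob (cnj l) (-(l*c)) y) = y"
    using mob_inv[OF l' c' den_nz[OF c' y]] .
  then show ?thesis unfolding e complex_cnj_cnj .
qed

lemma G_image:
  assumes l: "cmod l = 1" and c: "cmod c < 1"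
  shows "{z \<in> PDisk. F0 s (mob l c z) > 0} = mob (cnj l) (-(l*c)) ` {w \<in> PDisk. F0 s w > 0}"
proof -
  let ?f = "mob l c" and ?g = "mob (cnj l) (-(l*c))"
  have l': "cmod (cnj l) = 1" and c': "cmod (-(l*c)) < 1" using inv_params[OF l c] by auto
  show ?thesis
  proof (intro set_eqI iffI)
    fix z assume z: "z \<in> {z \<in> PDisk. F0 s (?f z) > 0}"
    then have zd: "cmod z < 1" unfolding PDisk_def by simp
    have "z = ?g (?f z)" using mob_inv[OF l c den_nz[OF c]] zd by simp
    moreover have "?f z \<in> {w \<in> PDisk. F0 s w > 0}" using z mob_disk[OF l c zd] unfolding PDisk_def by simp
    ultimately show "z \<in> ?g ` {w \<in> PDisk. F0 s w > 0}" by blast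
  next
    fix z assume "z \<in> ?g ` {w \<in> PDisk. F0 s w > 0}"
    then obtain w where w: "w \<in> PDisk" "F0 s w > 0" and zw: "z = ?g w" by auto
    have wd: "cmod w < 1" using w unfolding PDisk_def by simp
    have "?f z = w" unfolding zw using mob_fg[OF l c] wd by simp
    moreover have "cmod z < 1" unfolding zw using mob_disk[OF l' c' wd] .
    ultimately show "z \<in> {z \<in> PDisk. F0 s (?f z) > 0}" using w unfolding PDisk_def by simp
  qed
qed

lemma G_connected:
  assumes l: "cmod l = 1" and c: "cmod c < 1" and s: "0 < s" "s < 1"
  shows "connected {z \<in> PDisk. F0 s (mob l c z) > 0}"
proof -
  have c': "cmod (-(l*c)) < 1" using inv_params[OF l c] by auto
  have cg: "continuous_on {w \<in> PDisk. F0 s w > 0} (mob (cnj l) (-(l*c)))"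
    by (rule continuous_on_subset[OF mob_cont[OF c']]) auto
  show ?thesis unfolding G_image[OF l c]
    by (rule connected_continuous_image[OF cg Pos_connected[OF s]])
qed

lemma G_closure:
  assumes l: "cmod l = 1" and c: "cmod c < 1" and s: "0 < s" "s < 1"
    and z: "z \<in> PDisk" and G0: "F0 s (mob l c z) = 0"
  shows "z \<in> closure {z \<in> PDisk. F0 s (mob l c z) > 0}"
proof -
  let ?f = "mob l c" and ?g = "mob (cnj l) (-(l*c))"
  have l': "cmod (cnj l) = 1" and c': "cmod (-(l*c)) < 1" using inv_params[OF l c] by auto
  have zd: "cmod z < 1" using z unfolding PDisk_def by simp
  define w where "w = ?f z"
  have wd: "cmod w < 1" unfolding w_def using mob_disk[OF l c zd] .
  have h: "4 * s * \<bar>Im w\<bar> = (1 - s^2) * (1 - (cmod w)^2)" using F0_sign(2)[OF s wd] G0 w_def by simp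
  have h': "4 * s * \<bar>Im w\<bar> \<le> (1 - s^2) * (1 - (cmod w)^2)" using h by simp
  define t where "t n = 1 - inverse (real (Suc n))" for n
  have t: "0 \<le> t n" "t n < 1" for n unfolding t_def by (auto simp: field_simps)
  define x where "x n = ?g (of_real (t n) * w)" for n
  have xin: "x n \<in> {z \<in> PDisk. F0 s (?f z) > 0}" for n
  proof -
    have a: "cmod (of_real (t n) * w) < 1" "4 * s * \<bar>Im (of_real (t n) * w)\<bar> < (1 - s^2) * (1 - (cmod (of_real (t n) * w))^2)"
      using scale_in[OF s wd h' t(1)[of n] t(2)[of n]] by auto
    have "F0 s (of_real (t n) * w) > 0" using F0_sign(1)[OF s a(1)] a(2) by simp
    moreover have "?f (x n) = of_real (t n) * w" unfolding x_def using mob_fg[OF l c] a(1) by simp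
    moreover have "cmod (x n) < 1" unfolding x_def using mob_disk[OF l' c' a(1)] .
    ultimately show ?thesis unfolding PDisk_def by simp
  qed
  have tl: "t \<longlonglongrightarrow> 1"
  proof -
    have "(\<lambda>n. 1 - inverse (real (Suc n))) \<longlonglongrightarrow> 1 - 0"
      by (intro tendsto_diff tendsto_const LIMSEQ_inverse_real_of_nat)
    then show ?thesis unfolding t_def[abs_def] by simp
  qed
  have "(\<lambda>n. of_real (t n) * w) \<longlonglongrightarrow> of_real 1 * w"
    by (intro tendsto_mult tendsto_const tendsto_of_real tl)
  then have tw: "(\<lambda>n. of_real (t n) * w) \<longlonglongrightarrow> w" by simp
  have ic: "isCont ?g w"
    using mob_cont[OF c'] wd unfolding PDisk_ball
    by (simp add: continuous_on_eq_continuous_at)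
  have "x \<longlonglongrightarrow> ?g w" unfolding x_def[abs_def] using isCont_tendsto_compose[OF ic tw] .
  moreover have "?g w = z" unfolding w_def using mob_inv[OF l c den_nz[OF c]] zd by simp
  ultimately have xz: "x \<longlonglongrightarrow> z" by simp
  have xin': "\<forall>n. x n \<in> {z \<in> PDisk. F0 s (mob l c z) > 0}" using xin by blast
  show ?thesis unfolding closure_sequential by (rule exI[where x = x]) (rule conjI[OF xin' xz])
qed



theorem theorem2p3:
  fixes P Q R T1 T2 :: complex
  assumes "P \<in> PDisk" "Q \<in> PDisk" "R \<in> PDisk"
    and "P \<noteq> Q" "Q \<noteq> R" "P \<noteq> R"
    and "cmod T1 = 1" "cmod T2 = 1" "T1 \<noteq> T2"
    and "P \<in> hline T1 T2" "Q \<in> hline T1 T2"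
  defines "Carcs \<equiv> angle_arcs T1 T2 (2 * arctan (exp (hdist P Q)) - pi / 2)"
  defines "\<Theta> \<equiv> connected_component_set (PDisk - Carcs) P"
  defines "m \<equiv> circ_ideal_triangles P Q R"
  shows "(R \<in> \<Theta> \<longrightarrow> m = {})
       \<and> (R \<in> Carcs \<longrightarrow> finite m \<and> card m = 1)
       \<and> (R \<in> PDisk - closure \<Theta> \<longrightarrow> finite m \<and> card m = 2)"
proof -
  have Pd: "cmod P < 1" and Qd: "cmod Q < 1" and Rd: "cmod R < 1"
    using assms(1-3) unfolding PDisk_def by auto
  obtain l s where l: "cmod l = 1" and s: "0 < s" "s < 1" and fP: "mob l P P = 0"
    and fQ: "mob l P Q = of_real s"
    and ratio: "(cmod (P - Q))^2 / ((1 - (cmod P)^2) * (1 - (cmod Q)^2)) = s^2 / (1 - s^2)"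
    using normalize[OF Pd Qd assms(4)] by blast
  let ?f = "mob l P"
  have t1: "cmod (?f T1) = 1" using mob_circle[OF l Pd assms(7)] .
  have t2: "cmod (?f T2) = 1" using mob_circle[OF l Pd assms(8)] .
  have t12: "?f T1 \<noteq> ?f T2" using mob_inj[OF l Pd, of T1 T2] assms(7-9) by auto
  have h0: "0 \<in> hline (?f T1) (?f T2)" using mob_hline[OF l Pd assms(7,8,10)] fP by simp
  have hs: "of_real s \<in> hline (?f T1) (?f T2)" using mob_hline[OF l Pd assms(7,8,11)] fQ by simp
  have Tpm: "(?f T1 = 1 \<and> ?f T2 = -1) \<or> (?f T1 = -1 \<and> ?f T2 = 1)" using T_pm1[OF s t1 t2 t12 h0 hs] .
  have "2 * (cmod (P - Q))^2 / ((1 - (cmod P)^2) * (1 - (cmod Q)^2)) = 2 * s^2 / (1 - s^2)"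
    by (simp only: times_divide_eq_right[symmetric] ratio)
  then have hd: "hdist P Q = arcosh (1 + 2 * s^2 / (1 - s^2))" unfolding hdist_def by simp
  define \<alpha> where "\<alpha> = 2 * arctan (exp (hdist P Q)) - pi / 2"
  have ca: "cos \<alpha> = (1 - s^2) / (1 + s^2)" "0 \<le> \<alpha>" "\<alpha> \<le> pi"
    unfolding \<alpha>_def hd using cos_alpha_s[OF s] by auto
  have Cdef: "Carcs = angle_arcs T1 T2 \<alpha>" unfolding Carcs_def \<alpha>_def ..
  have A1: "angle_arcs (?f T1) (?f T2) \<alpha> = angle_arcs 1 (-1) \<alpha>"
    using Tpm angle_arcs_sym by metis
  have A2: "angle_arcs 1 (-1) \<alpha> = {z \<in> PDisk. F0 s z = 0}"
    using angle_arcs_gen[of 1 "-1" \<alpha>] ca carcs_norm[OF s] by simp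
  have Cchar: "z \<in> Carcs \<longleftrightarrow> F0 s (?f z) = 0" if z: "z \<in> PDisk" for z
  proof -
    have zd: "cmod z < 1" using z unfolding PDisk_def by simp
    have fz: "?f z \<in> PDisk" using mob_disk[OF l Pd zd] unfolding PDisk_def by simp
    have "z \<in> Carcs \<longleftrightarrow> ?f z \<in> angle_arcs (?f T1) (?f T2) \<alpha>"
      unfolding Cdef using mob_angle_arcs[OF l Pd assms(7,8) ca(2,3) zd] .
    also have "\<dots> \<longleftrightarrow> F0 s (?f z) = 0" unfolding A1 A2 using fz by simp
    finally show ?thesis .
  qed
  have Csub: "Carcs \<subseteq> PDisk" unfolding Cdef angle_arcs_def by auto
  let ?G = "\<lambda>z. F0 s (?f z)"
  have openD: "open PDisk" unfolding PDisk_ball by simp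
  have cG: "continuous_on PDisk ?G"
    using continuous_on_compose[OF mob_cont[OF Pd] F0_cont] unfolding o_def .
  have GP: "?G P > 0"
  proof -
    have "?G P = (1 - s^2)^2" unfolding fP F0_def by simp
    moreover have "0 < 1 - s^2" using s2_lt[OF s] by simp
    ultimately show ?thesis by simp
  qed
  have topo1: "connected_component_set (PDisk - Carcs) P = {z \<in> PDisk. ?G z > 0}"
    and topo2: "\<And>z. z \<in> PDisk \<Longrightarrow> z \<notin> closure (connected_component_set (PDisk - Carcs) P) \<Longrightarrow> ?G z < 0"
    using topo_generic[OF openD cG assms(1) GP Cchar G_connected[OF l Pd s] G_closure[OF l Pd s]] by blast+
  have Rn: "cmod (?f R) < 1" using mob_disk[OF l Pd Rd] .
  have bij: "bij_betw (\<lambda>X. ?f ` X) m (circ_ideal_triangles 0 (of_real s) (?f R))"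
    using mob_circ_bij[OF l Pd Pd Qd Rd] unfolding m_def fP fQ .
  have cardm: "card m = card (circ_ideal_triangles 0 (of_real s) (?f R))" using bij_betw_same_card[OF bij] .
  have finm: "finite m \<longleftrightarrow> finite (circ_ideal_triangles 0 (of_real s) (?f R))" using bij_betw_finite[OF bij] .
  have cn: "(F0 s (?f R) > 0 \<longrightarrow> circ_ideal_triangles 0 (of_real s) (?f R) = {})
    \<and> (F0 s (?f R) = 0 \<longrightarrow> finite (circ_ideal_triangles 0 (of_real s) (?f R)) \<and> card (circ_ideal_triangles 0 (of_real s) (?f R)) = 1)
    \<and> (F0 s (?f R) < 0 \<longrightarrow> finite (circ_ideal_triangles 0 (of_real s) (?f R)) \<and> card (circ_ideal_triangles 0 (of_real s) (?f R)) = 2)"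
    using card_norm[OF s Rn] .
  show ?thesis
  proof (intro conjI impI)
    assume "R \<in> \<Theta>"
    then have "F0 s (?f R) > 0" unfolding \<Theta>_def topo1 by simp
    then have "circ_ideal_triangles 0 (of_real s) (?f R) = {}" using cn by blast
    then show "m = {}" using bij by (simp add: bij_betw_def)
  next
    assume "R \<in> Carcs"
    then have "F0 s (?f R) = 0" using Cchar assms(3) by blast
    then show "finite m" "card m = 1" using cn cardm finm by auto
  next
    assume "R \<in> PDisk - closure \<Theta>"
    then have "F0 s (?f R) < 0" using topo2 unfolding \<Theta>_def by blast
    then show "finite m" "card m = 2" using cn cardm finm by auto
  qed
qed


end
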